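(* There is a constant $C(m,\tau,\gamma,\beta,d)$ such that the following holds. Let $\ell\ge1$, $L=\ell^\gamma$, $\Lambda_L=\Lambda_L^{(N)}(\mathbf x_0)$ with $\mathbf x_0\in\mathbb Z^{Nd}$, and let $(\psi,\mu)$ be an eigenpair of $H_{\Lambda_L}$. Let $\Upsilon\subsetneq\Lambda_L$ be an $m$-buffered cube in $\Lambda_L$ with set of good centers $\mathcal G_\Upsilon$, and suppose $$\operatorname{dist}(\mu,\sigma(H_\Upsilon))\ge\tfrac12e^{-L^\beta},\qquad \min_{\mathbf a\in\mathcal G_\Upsilon}\operatorname{dist}(\mu,\sigma(H_{\Lambda_\ell(\mathbf a)}))\ge\tfrac12e^{-L^\beta},$$ and $\ell\ge C(m,\tau,\gamma,\beta,d)(N\log(2+N))^{1/\tau}$. Then, with $m'=m(1-3\ell^{-\frac{1-\tau}{2}})$, $$\max_{\mathbf y\in\Upsilon}|\psi(\mathbf y)|\le e^{-\frac{m'}{2}\ell}\max_{\mathbf a\in\mathcal G_\Upsilon}\max_{\mathbf v\in\partial^{\Lambda_L}_{ex}\Lambda_\ell(\mathbf a)}|\psi(\mathbf v)|.$$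
   Context: Fix $\beta,\tau\in(0,1)$, $\gamma>1$ with $\beta<\gamma^{-1}<1<\gamma<2$, $\max(\gamma\beta,\gamma^{-1})<\tau<1$; $m>0$, $d,N\ge1$. Points of $\mathbb Z^{Nd}$: $\mathbf x=(x_1,\dots,x_N)$, $x_j\in\mathbb Z^d$; $d_S(\mathbf x,\mathbf y)=\min_{\pi\in S_N}\|\mathbf x-\pi\mathbf y\|_\infty$ with $\pi\mathbf y=(y_{\pi(1)},\dots,y_{\pi(N)})$; $d_S(\mathbf x,A)=\min_{\mathbf y\in A}d_S(\mathbf x,\mathbf y)$. $\Lambda_R(\mathbf b)=\Lambda_R^{(N)}(\mathbf b)=\{\mathbf x:d_S(\mathbf x,\mathbf b)\le R\}$. $H=-\Delta^{(N)}+\lambda V+U$ on $\ell^2(\mathbb Z^{Nd})$ with $(\Delta^{(N)}\varphi)(\mathbf x)=\sum_{\|\mathbf y-\mathbf x\|_1=1}\varphi(\mathbf y)$, $V(\mathbf x)=\sum_j\mathcal V(x_j)$, $U(\mathbf x)=\sum_{i<j}\mathcal U(x_i-x_j)$ (fixed real $\mathcal V$, finitely supported $\mathcal U$, $\lambda>0$); $H_\Theta=1_\Theta H1_\Theta$ on $\ell^2(\Theta)$. For $\Phi\subseteq\Theta$ symmetric: $\partial^\Theta\Phi=\{(\mathbf u,\mathbf v)\in\Phi\times(\Theta\setminus\Phi):d_S(\mathbf u,\mathbf v)=1\}$; $\partial^\Theta_{ex}\Phi=\{\mathbf v\in\Theta\setminus\Phi:\exists\mathbf u,(\mathbf u,\mathbf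 v)\in\partial^\Theta\Phi\}$; $\partial^\Theta_{in}\Phi=\{\mathbf u\in\Phi:\exists\mathbf v,(\mathbf u,\mathbf v)\in\partial^\Theta\Phi\}$; $\Phi^{\Theta,r}=\{\mathbf x\in\Phi:d_S(\mathbf x,\Theta\setminus\Phi)\ge r\}$. Localizing: for a cube $\Lambda_\ell$, $\varphi\in\ell^2(\Lambda_\ell)$ is $(\mathbf x,m)$-localizing if $\|\varphi\|_2=1$ and $|\varphi(\mathbf y)|\le e^{-md_S(\mathbf y,\mathbf x)}$ for all $\mathbf y\in\Lambda_\ell$ with $d_S(\mathbf y,\mathbf x)\ge\ell^\tau$; $m$-localizing if this holds for some $\mathbf x\in\Lambda_\ell$; $\Lambda_\ell$ is $m$-localizing for $H$ if $H_{\Lambda_\ell}$ has an orthonormal eigenbasis of $m$-localizing functions. Cover: $\Xi_{L,\ell}$ is the set of $\mathbf a\in\mathbb Z^{Nd}$ with $\Lambda_\ell(\mathbf a)\subseteq\Lambda_L$. Buffered cube: a symmetric set $\Upsilon\subseteq\Lambda_L$ is an ($m$-)buffered cube in $\Lambda_L$ if (i) $\Upsilon=\Lambda_R(\mathbf b)\cap\Lambda_L$ for some $\mathbf b\in\Lambda_L$ and $\ell\le R\le L$, and (ii) there is a set of good centers $\mathcal G_\Upsilon\subseteq\Xi_{L,\ell}$ such that each $\Lambda_\ell(\mathbf a)$, $\mathbf a\in\mathcal G_\Upsilon$, is $m$-localizing for $H$, and $\partial^{\Lambda_L}_{in}\Upsilon\subseteq\bigcup_{\mathbf a\in\mathcal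 G_\Upsilon}\Lambda_\ell^{\Lambda_L,\ell}(\mathbf a)$, where $\Lambda_\ell^{\Lambda_L,\ell}(\mathbf a)=\{\mathbf x\in\Lambda_\ell(\mathbf a):d_S(\mathbf x,\Lambda_L\setminus\Lambda_\ell(\mathbf a))\ge\ell\}$. *)

theory Defs
  imports "HOL-Analysis.Analysis" "HOL-Combinatorics.Permutations"
begin

text \<open>A point x = (x_1,...,x_N) of Z^(Nd) is encoded as a function
  x :: nat => nat => int, where x j k is the k-th coordinate of particle j;
  only points with x j k = 0 whenever j >= N or k >= d are admissible.\<close>

type_synonym pt = "nat \<Rightarrow> nat \<Rightarrow> int"

definition conf :: "nat \<Rightarrow> nat \<Rightarrow> pt set" where
  "conf N d = {x. \<forall>j k. (N \<le> j \<or> d \<le> k) \<longrightarrow> x j k = 0}"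

definition supdist :: "nat \<Rightarrow> nat \<Rightarrow> pt \<Rightarrow> pt \<Rightarrow> int" where
  "supdist N d x y = Max {\<bar>x j k - y j k\<bar> | j k. j < N \<and> k < d}"

definition l1dist :: "nat \<Rightarrow> nat \<Rightarrow> pt \<Rightarrow> pt \<Rightarrow> int" where
  "l1dist N d x y = (\<Sum>j<N. \<Sum>k<d. \<bar>x j k - y j k\<bar>)"

definition perm_pt :: "(nat \<Rightarrow> nat) \<Rightarrow> pt \<Rightarrow> pt" where
  "perm_pt \<pi> y = (\<lambda>j. y (\<pi> j))"

definition dS :: "nat \<Rightarrow> nat \<Rightarrow> pt \<Rightarrow> pt \<Rightarrow> real" where
  "dS N d x y = real_of_int (Min {supdist N d x (perm_pt \<pi> y) | \<pi>. \<pi> permutes {..<N}})"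

definition cube :: "nat \<Rightarrow> nat \<Rightarrow> real \<Rightarrow> pt \<Rightarrow> pt set" where
  "cube N d R b = {x \<in> conf N d. dS N d x b \<le> R}"

definition symmetric_set :: "nat \<Rightarrow> pt set \<Rightarrow> bool" where
  "symmetric_set N \<Phi> \<longleftrightarrow> (\<forall>x\<in>\<Phi>. \<forall>\<pi>. \<pi> permutes {..<N} \<longrightarrow> perm_pt \<pi> x \<in> \<Phi>)"

definition bdry :: "nat \<Rightarrow> nat \<Rightarrow> pt set \<Rightarrow> pt set \<Rightarrow> (pt \<times> pt) set" where
  "bdry N d \<Theta> \<Phi> = {(u, v). u \<in> \<Phi> \<and> v \<in> \<Theta> - \<Phi> \<and> dS N d u v = 1}"

definition ex_bdry :: "nat \<Rightarrow> nat \<Rightarrow> pt set \<Rightarrow> pt set \<Rightarrow> pt set" where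
  "ex_bdry N d \<Theta> \<Phi> = {v \<in> \<Theta> - \<Phi>. \<exists>u. (u, v) \<in> bdry N d \<Theta> \<Phi>}"

definition in_bdry :: "nat \<Rightarrow> nat \<Rightarrow> pt set \<Rightarrow> pt set \<Rightarrow> pt set" where
  "in_bdry N d \<Theta> \<Phi> = {u \<in> \<Phi>. \<exists>v. (u, v) \<in> bdry N d \<Theta> \<Phi>}"

text \<open>Phi^{Theta,r} = {x in Phi : d_S(x, Theta - Phi) >= r}
  (with the convention d_S(x, {}) = infinity)\<close>
definition inner_part :: "nat \<Rightarrow> nat \<Rightarrow> pt set \<Rightarrow> pt set \<Rightarrow> real \<Rightarrow> pt set" where
  "inner_part N d \<Theta> \<Phi> r = {x \<in> \<Phi>. \<forall>y \<in> \<Theta> - \<Phi>. r \<le> dS N d x y}"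

definition potV :: "nat \<Rightarrow> ((nat \<Rightarrow> int) \<Rightarrow> real) \<Rightarrow> pt \<Rightarrow> real" where
  "potV N calV x = (\<Sum>j<N. calV (x j))"

definition potU :: "nat \<Rightarrow> ((nat \<Rightarrow> int) \<Rightarrow> real) \<Rightarrow> pt \<Rightarrow> real" where
  "potU N calU x = (\<Sum>j<N. \<Sum>i<j. calU (\<lambda>k. x i k - x j k))"

text \<open>H_Theta = 1_Theta H 1_Theta, H = - Delta + lambda V + U, acting on
  functions phi vanishing off Theta (values given at points of Theta).\<close>
definition Hrestr :: "nat \<Rightarrow> nat \<Rightarrow> real \<Rightarrow> ((nat \<Rightarrow> int) \<Rightarrow> real) \<Rightarrow> ((nat \<Rightarrow> int) \<Rightarrow> real)
    \<Rightarrow> pt set \<Rightarrow> (pt \<Rightarrow> complex) \<Rightarrow> pt \<Rightarrow> complex" where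
  "Hrestr N d lam calV calU \<Theta> \<phi> x =
     (if x \<in> \<Theta> then
        - (\<Sum>y \<in> {y \<in> conf N d. l1dist N d y x = 1}. (if y \<in> \<Theta> then \<phi> y else 0))
        + of_real (lam * potV N calV x + potU N calU x) * \<phi> x
      else 0)"

definition supp_in :: "pt set \<Rightarrow> (pt \<Rightarrow> complex) \<Rightarrow> bool" where
  "supp_in \<Theta> \<phi> \<longleftrightarrow> (\<forall>x. x \<notin> \<Theta> \<longrightarrow> \<phi> x = 0)"

definition is_eigenpair :: "nat \<Rightarrow> nat \<Rightarrow> real \<Rightarrow> ((nat \<Rightarrow> int) \<Rightarrow> real) \<Rightarrow> ((nat \<Rightarrow> int) \<Rightarrow> real)
    \<Rightarrow> pt set \<Rightarrow> (pt \<Rightarrow> complex) \<Rightarrow> real \<Rightarrow> bool" where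
  "is_eigenpair N d lam calV calU \<Theta> \<phi> e \<longleftrightarrow>
     supp_in \<Theta> \<phi> \<and> (\<exists>x\<in>\<Theta>. \<phi> x \<noteq> 0) \<and>
     (\<forall>x\<in>\<Theta>. Hrestr N d lam calV calU \<Theta> \<phi> x = of_real e * \<phi> x)"

text \<open>spectrum of H_Theta (Theta finite, H_Theta self-adjoint: the set of its
  eigenvalues, all of which are real)\<close>
definition spec :: "nat \<Rightarrow> nat \<Rightarrow> real \<Rightarrow> ((nat \<Rightarrow> int) \<Rightarrow> real) \<Rightarrow> ((nat \<Rightarrow> int) \<Rightarrow> real)
    \<Rightarrow> pt set \<Rightarrow> real set" where
  "spec N d lam calV calU \<Theta> = {e. \<exists>\<phi>. is_eigenpair N d lam calV calU \<Theta> \<phi> e}"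

definition inner_l2 :: "pt set \<Rightarrow> (pt \<Rightarrow> complex) \<Rightarrow> (pt \<Rightarrow> complex) \<Rightarrow> complex" where
  "inner_l2 \<Theta> \<phi> \<psi> = (\<Sum>x\<in>\<Theta>. \<phi> x * cnj (\<psi> x))"

definition loc_at :: "nat \<Rightarrow> nat \<Rightarrow> real \<Rightarrow> real \<Rightarrow> real \<Rightarrow> pt set \<Rightarrow> pt \<Rightarrow> (pt \<Rightarrow> complex) \<Rightarrow> bool" where
  "loc_at N d \<tau> m ell \<Theta> x \<phi> \<longleftrightarrow>
     (\<Sum>y\<in>\<Theta>. (cmod (\<phi> y))\<^sup>2) = 1 \<and>
     (\<forall>y\<in>\<Theta>. ell powr \<tau> \<le> dS N d y x \<longrightarrow> cmod (\<phi> y) \<le> exp (- m * dS N d y x))"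

definition m_loc_fun :: "nat \<Rightarrow> nat \<Rightarrow> real \<Rightarrow> real \<Rightarrow> real \<Rightarrow> pt set \<Rightarrow> (pt \<Rightarrow> complex) \<Rightarrow> bool" where
  "m_loc_fun N d \<tau> m ell \<Theta> \<phi> \<longleftrightarrow> (\<exists>x\<in>\<Theta>. loc_at N d \<tau> m ell \<Theta> x \<phi>)"

definition m_loc_cube :: "nat \<Rightarrow> nat \<Rightarrow> real \<Rightarrow> ((nat \<Rightarrow> int) \<Rightarrow> real) \<Rightarrow> ((nat \<Rightarrow> int) \<Rightarrow> real)
    \<Rightarrow> real \<Rightarrow> real \<Rightarrow> real \<Rightarrow> pt \<Rightarrow> bool" where
  "m_loc_cube N d lam calV calU \<tau> m ell a \<longleftrightarrow>
     (let \<Theta> = cube N d ell a in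
      \<exists>B. finite B \<and>
        (\<forall>\<phi>\<in>B. supp_in \<Theta> \<phi> \<and> (\<exists>e. is_eigenpair N d lam calV calU \<Theta> \<phi> e)
                 \<and> m_loc_fun N d \<tau> m ell \<Theta> \<phi>) \<and>
        (\<forall>\<phi>\<in>B. \<forall>\<psi>\<in>B. inner_l2 \<Theta> \<phi> \<psi> = (if \<phi> = \<psi> then 1 else 0)) \<and>
        (\<forall>f. supp_in \<Theta> f \<longrightarrow> (\<exists>c. \<forall>x\<in>\<Theta>. f x = (\<Sum>\<phi>\<in>B. c \<phi> * \<phi> x))))"

definition Xi :: "nat \<Rightarrow> nat \<Rightarrow> real \<Rightarrow> pt \<Rightarrow> real \<Rightarrow> pt set" where
  "Xi N d L x0 ell = {a \<in> conf N d. cube N d ell a \<subseteq> cube N d L x0}"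

definition buffered :: "nat \<Rightarrow> nat \<Rightarrow> real \<Rightarrow> ((nat \<Rightarrow> int) \<Rightarrow> real) \<Rightarrow> ((nat \<Rightarrow> int) \<Rightarrow> real)
    \<Rightarrow> real \<Rightarrow> real \<Rightarrow> real \<Rightarrow> real \<Rightarrow> pt \<Rightarrow> pt set \<Rightarrow> pt set \<Rightarrow> bool" where
  "buffered N d lam calV calU \<tau> m ell L x0 \<Upsilon> G \<longleftrightarrow>
     symmetric_set N \<Upsilon> \<and> \<Upsilon> \<subseteq> cube N d L x0 \<and>
     (\<exists>b R. b \<in> cube N d L x0 \<and> ell \<le> R \<and> R \<le> L \<and> \<Upsilon> = cube N d R b \<inter> cube N d L x0) \<and>
     G \<subseteq> Xi N d L x0 ell \<and>
     (\<forall>a\<in>G. m_loc_cube N d lam calV calU \<tau> m ell a) \<and>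
     in_bdry N d (cube N d L x0) \<Upsilon> \<subseteq>
       (\<Union>a\<in>G. inner_part N d (cube N d L x0) (cube N d ell a) ell)"

end

theory Submission
  imports Defs "HOL-Library.Function_Algebras" "HOL-Computational_Algebra.Fundamental_Theorem_Algebra" "HOL-Real_Asymp.Real_Asymp"
begin


definition idxs :: "nat \<Rightarrow> nat \<Rightarrow> (nat \<times> nat) set" where
  "idxs N d = {..<N} \<times> {..<d}"

lemma supdist_alt: "supdist N d x y = Max ((\<lambda>(j,k). \<bar>x j k - y j k\<bar>) ` idxs N d)"
  unfolding supdist_def idxs_def by (rule arg_cong[where f=Max]) auto

lemma idxs_fin: "finite (idxs N d)" unfolding idxs_def by auto
lemma idxs_ne: "1 \<le> N \<Longrightarrow> 1 \<le> d \<Longrightarrow> idxs N d \<noteq> {}" unfolding idxs_def by (auto simp: lessThan_empty_iff)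

lemma supdist_ge:
  assumes "1 \<le> N" "1 \<le> d" "j < N" "k < d"
  shows "\<bar>x j k - y j k\<bar> \<le> supdist N d x y"
  unfolding supdist_alt
  by (rule Max_ge) (use assms in \<open>auto simp: idxs_fin idxs_def\<close>)

lemma supdist_le:
  assumes "1 \<le> N" "1 \<le> d" "\<And>j k. j < N \<Longrightarrow> k < d \<Longrightarrow> \<bar>x j k - y j k\<bar> \<le> c"
  shows "supdist N d x y \<le> c"
  unfolding supdist_alt
  using assms idxs_fin[of N d] idxs_ne[of N d] by (subst Max_le_iff) (auto simp: idxs_def)

lemma supdist_nonneg: "1 \<le> N \<Longrightarrow> 1 \<le> d \<Longrightarrow> 0 \<le> supdist N d x y"
  using supdist_ge[of N d 0 0 x y] by auto

lemma supdist_sym: "1 \<le> N \<Longrightarrow> 1 \<le> d \<Longrightarrow> supdist N d x y = supdist N d y x"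
  by (intro antisym supdist_le) (auto simp: abs_minus_commute intro: supdist_ge[of N d _ _ y x, simplified abs_minus_commute] supdist_ge[of N d _ _ x y, simplified abs_minus_commute])

lemma supdist_triangle:
  assumes "1 \<le> N" "1 \<le> d"
  shows "supdist N d x z \<le> supdist N d x y + supdist N d y z"
proof (rule supdist_le[OF assms])
  fix j k assume "j < N" "k < d"
  then have "\<bar>x j k - y j k\<bar> \<le> supdist N d x y" "\<bar>y j k - z j k\<bar> \<le> supdist N d y z"
    using supdist_ge assms by auto
  then show "\<bar>x j k - z j k\<bar> \<le> supdist N d x y + supdist N d y z" by linarith
qed

lemma supdist_refl: "1 \<le> N \<Longrightarrow> 1 \<le> d \<Longrightarrow> supdist N d x x = 0"
  by (intro antisym supdist_le supdist_nonneg) auto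

lemma perm_pt_comp: "perm_pt \<pi> (perm_pt \<sigma> y) = perm_pt (\<sigma> \<circ> \<pi>) y"
  by (simp add: perm_pt_def o_def)

lemma perm_pt_id[simp]: "perm_pt id y = y"
  by (simp add: perm_pt_def)

lemma supdist_perm:
  assumes "1 \<le> N" "1 \<le> d" "\<pi> permutes {..<N}"
  shows "supdist N d (perm_pt \<pi> x) (perm_pt \<pi> y) = supdist N d x y"
proof (intro antisym supdist_le[OF assms(1,2)])
  fix j k assume "j < N" "k < d"
  then show "\<bar>perm_pt \<pi> x j k - perm_pt \<pi> y j k\<bar> \<le> supdist N d x y"
    using supdist_ge[OF assms(1,2)] permutes_in_image[OF assms(3)] by (auto simp: perm_pt_def)
next
  fix j k assume jk: "j < N" "k < d"
  let ?j = "inv \<pi> j"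
  have "?j < N" using jk permutes_in_image[OF permutes_inv[OF assms(3)]] by auto
  then have "\<bar>perm_pt \<pi> x ?j k - perm_pt \<pi> y ?j k\<bar> \<le> supdist N d (perm_pt \<pi> x) (perm_pt \<pi> y)"
    using supdist_ge[OF assms(1,2)] jk by auto
  then show "\<bar>x j k - y j k\<bar> \<le> supdist N d (perm_pt \<pi> x) (perm_pt \<pi> y)"
    by (simp add: perm_pt_def permutes_inverses[OF assms(3)])
qed

lemma perm_set_fin: "finite {supdist N d x (perm_pt \<pi> y) | \<pi>. \<pi> permutes {..<N}}"
proof -
  have "{supdist N d x (perm_pt \<pi> y) | \<pi>. \<pi> permutes {..<N}} =
        (\<lambda>\<pi>. supdist N d x (perm_pt \<pi> y)) ` {\<pi>. \<pi> permutes {..<N}}" by auto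
  then show ?thesis using finite_permutations[of "{..<N}"] by auto
qed

lemma perm_set_ne: "{supdist N d x (perm_pt \<pi> y) | \<pi>. \<pi> permutes {..<N}} \<noteq> {}"
  using permutes_id by blast

lemma dS_le: "\<pi> permutes {..<N} \<Longrightarrow> dS N d x y \<le> supdist N d x (perm_pt \<pi> y)"
  unfolding dS_def using perm_set_fin[of N d x y] by (auto intro!: Min_le)

lemma dS_ex: "\<exists>\<pi>. \<pi> permutes {..<N} \<and> dS N d x y = supdist N d x (perm_pt \<pi> y)"
proof -
  have "Min {supdist N d x (perm_pt \<pi> y) | \<pi>. \<pi> permutes {..<N}} \<in> {supdist N d x (perm_pt \<pi> y) | \<pi>. \<pi> permutes {..<N}}"
    using Min_in[OF perm_set_fin perm_set_ne] .
  then show ?thesis unfolding dS_def by auto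
qed

lemma dS_le_supdist: "dS N d x y \<le> supdist N d x y"
  using dS_le[OF permutes_id, of N d x y] by (simp add: id_def[symmetric])

lemma dS_nonneg: "1 \<le> N \<Longrightarrow> 1 \<le> d \<Longrightarrow> 0 \<le> dS N d x y"
  using dS_ex[of N d x y] supdist_nonneg by fastforce

lemma dS_refl: "1 \<le> N \<Longrightarrow> 1 \<le> d \<Longrightarrow> dS N d x x = 0"
  using dS_le_supdist[of N d x x] dS_nonneg[of N d x x] supdist_refl[of N d x] by simp

lemma dS_sym:
  assumes "1 \<le> N" "1 \<le> d"
  shows "dS N d x y = dS N d y x"
proof -
  have *: "dS N d y x \<le> dS N d x y" for x y
  proof -
    obtain \<pi> where p: "\<pi> permutes {..<N}" "dS N d x y = supdist N d x (perm_pt \<pi> y)"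
      using dS_ex by blast
    have ip: "inv \<pi> permutes {..<N}" using permutes_inv[OF p(1)] .
    have "supdist N d x (perm_pt \<pi> y) = supdist N d (perm_pt (inv \<pi>) x) (perm_pt (inv \<pi>) (perm_pt \<pi> y))"
      using supdist_perm[OF assms ip] by simp
    also have "perm_pt (inv \<pi>) (perm_pt \<pi> y) = y"
      by (simp add: perm_pt_def permutes_inverses[OF p(1)])
    finally have "dS N d x y = supdist N d y (perm_pt (inv \<pi>) x)"
      using p(2) supdist_sym[OF assms] by simp
    then show ?thesis using dS_le[OF ip] by simp
  qed
  show ?thesis using *[of x y] *[of y x] by simp
qed

lemma dS_triangle:
  assumes "1 \<le> N" "1 \<le> d"
  shows "dS N d x z \<le> dS N d x y + dS N d y z"
proof -
  obtain \<pi> where p: "\<pi> permutes {..<N}" "dS N d x y = supdist N d x (perm_pt \<pi> y)"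
    using dS_ex by blast
  obtain \<sigma> where s: "\<sigma> permutes {..<N}" "dS N d y z = supdist N d y (perm_pt \<sigma> z)"
    using dS_ex by blast
  have "supdist N d (perm_pt \<pi> y) (perm_pt \<pi> (perm_pt \<sigma> z)) = supdist N d y (perm_pt \<sigma> z)"
    using supdist_perm[OF assms p(1)] by simp
  moreover have "perm_pt \<pi> (perm_pt \<sigma> z) = perm_pt (\<sigma> \<circ> \<pi>) z" by (rule perm_pt_comp)
  moreover have "\<sigma> \<circ> \<pi> permutes {..<N}" using permutes_compose[OF p(1) s(1)] .
  ultimately have "dS N d x z \<le> supdist N d x (perm_pt \<pi> y) + supdist N d y (perm_pt \<sigma> z)"
    using dS_le[of "\<sigma> \<circ> \<pi>" N d x z] supdist_triangle[OF assms, of x "perm_pt (\<sigma> \<circ> \<pi>) z" "perm_pt \<pi> y"]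
    by (smt (verit) of_int_le_iff)
  then show ?thesis using p s by simp
qed

lemma dS_perm2:
  assumes "1 \<le> N" "1 \<le> d" "\<pi> permutes {..<N}"
  shows "dS N d x (perm_pt \<pi> y) = dS N d x y"
proof -
  have *: "dS N d x (perm_pt \<pi> y) \<le> dS N d x y" if p: "\<pi> permutes {..<N}" for \<pi> y
  proof -
    obtain \<sigma> where s: "\<sigma> permutes {..<N}" "dS N d x y = supdist N d x (perm_pt \<sigma> y)"
      using dS_ex by blast
    have q: "inv \<pi> \<circ> \<sigma> permutes {..<N}" using permutes_compose[OF s(1) permutes_inv[OF p]] .
    have "perm_pt (inv \<pi> \<circ> \<sigma>) (perm_pt \<pi> y) = perm_pt \<sigma> y"
      by (simp add: perm_pt_def permutes_inverses[OF p])
    then show ?thesis using dS_le[OF q, of d x "perm_pt \<pi> y"] s by simp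
  qed
  have "perm_pt (inv \<pi>) (perm_pt \<pi> y) = y"
    by (simp add: perm_pt_def permutes_inverses[OF assms(3)])
  then have "dS N d x y \<le> dS N d x (perm_pt \<pi> y)"
    using *[OF permutes_inv[OF assms(3)], of "perm_pt \<pi> y"] by simp
  then show ?thesis using *[OF assms(3), of y] by linarith
qed

lemma dS_perm1:
  assumes "1 \<le> N" "1 \<le> d" "\<pi> permutes {..<N}"
  shows "dS N d (perm_pt \<pi> x) y = dS N d x y"
  using dS_perm2[OF assms, of y x] dS_sym[OF assms(1,2)] by simp

lemma perm_conf: "\<pi> permutes {..<N} \<Longrightarrow> x \<in> conf N d \<Longrightarrow> perm_pt \<pi> x \<in> conf N d"
  unfolding conf_def perm_pt_def by (auto simp: permutes_not_in)

lemma dS_int: "\<exists>i::int. dS N d x y = of_int i"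
  unfolding dS_def by auto

lemma dS_lt1: "1 \<le> N \<Longrightarrow> 1 \<le> d \<Longrightarrow> dS N d x y < 1 \<Longrightarrow> dS N d x y = 0"
  using dS_int[of N d x y] dS_nonneg[of N d x y] by auto


definition box :: "nat \<Rightarrow> nat \<Rightarrow> pt \<Rightarrow> int \<Rightarrow> pt set" where
  "box N d c r = {x \<in> conf N d. \<forall>j<N. \<forall>k<d. \<bar>x j k - c j k\<bar> \<le> r}"

lemma conf_eqI: "x \<in> conf N d \<Longrightarrow> y \<in> conf N d \<Longrightarrow> (\<And>j k. j < N \<Longrightarrow> k < d \<Longrightarrow> x j k = y j k) \<Longrightarrow> x = y"
proof (intro ext)
  fix j k
  assume a: "x \<in> conf N d" "y \<in> conf N d" "\<And>j k. j < N \<Longrightarrow> k < d \<Longrightarrow> x j k = y j k"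
  show "x j k = y j k"
  proof (cases "j < N \<and> k < d")
    case True then show ?thesis using a(3) by blast
  next
    case False then show ?thesis using a(1,2) unfolding conf_def by auto
  qed
qed

lemma box_fin_card:
  assumes "0 \<le> r"
  shows "finite (box N d c r) \<and> card (box N d c r) \<le> (nat (2*r+1)) ^ (N*d)"
proof -
  define F where "F x = restrict (\<lambda>p. x (fst p) (snd p)) (idxs N d)" for x :: pt
  define P where "P = PiE (idxs N d) (\<lambda>p. {c (fst p) (snd p) - r .. c (fst p) (snd p) + r})"
  have inj: "inj_on F (box N d c r)"
  proof
    fix x y assume xy: "x \<in> box N d c r" "y \<in> box N d c r" "F x = F y"
    show "x = y"
    proof (rule conf_eqI)
      show "x \<in> conf N d" "y \<in> conf N d" using xy by (auto simp: box_def)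
      fix j k assume "j < N" "k < d"
      then have "F x (j,k) = F y (j,k)" using xy by simp
      then show "x j k = y j k" using \<open>j<N\<close> \<open>k<d\<close> by (simp add: F_def idxs_def)
    qed
  qed
  have sub: "F ` box N d c r \<subseteq> P"
  proof
    fix y assume "y \<in> F ` box N d c r"
    then obtain x where x: "x \<in> box N d c r" "y = F x" by blast
    have "x (fst p) (snd p) \<in> {c (fst p) (snd p) - r .. c (fst p) (snd p) + r}" if pin: "p \<in> idxs N d" for p
    proof -
      obtain j k where p: "p = (j,k)" "j < N" "k < d" using pin unfolding idxs_def by (cases p) blast
      then have "\<bar>x j k - c j k\<bar> \<le> r" using x(1) unfolding box_def by blast
      then show ?thesis using p by (simp add: abs_le_iff)
    qed
    then show "y \<in> P" unfolding P_def x(2) F_def by (simp add: restrict_PiE_iff)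
  qed
  have finP: "finite P" unfolding P_def by (intro finite_PiE idxs_fin) auto
  have cardP: "card P = (nat (2*r+1)) ^ (N*d)"
  proof -
    have "card P = (\<Prod>p\<in>idxs N d. card {c (fst p) (snd p) - r .. c (fst p) (snd p) + r})"
      unfolding P_def by (rule card_PiE[OF idxs_fin])
    also have "\<dots> = (\<Prod>p\<in>idxs N d. nat (2*r+1))"
      by (rule prod.cong) auto
    also have "\<dots> = (nat (2*r+1)) ^ card (idxs N d)" by simp
    also have "card (idxs N d) = N * d" unfolding idxs_def by (simp add: card_cartesian_product)
    finally show ?thesis .
  qed
  have "finite (F ` box N d c r)" using sub finP by (rule finite_subset)
  then have "finite (box N d c r)" using inj by (rule finite_imageD)
  moreover have "card (box N d c r) \<le> card P"
    using card_inj_on_le[OF inj sub finP] .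
  then have "card (box N d c r) \<le> (nat (2*r+1)) ^ (N*d)" using cardP by (rule ord_le_eq_trans)
  ultimately show ?thesis by (rule conjI)
qed

lemma cube_sub_boxes:
  assumes "1 \<le> N" "1 \<le> d"
  shows "cube N d R b \<subseteq> (\<Union>\<pi>\<in>{\<pi>. \<pi> permutes {..<N}}. box N d (perm_pt \<pi> b) \<lfloor>R\<rfloor>)"
proof
  fix x assume x: "x \<in> cube N d R b"
  obtain \<pi> where p: "\<pi> permutes {..<N}" "dS N d x b = supdist N d x (perm_pt \<pi> b)"
    using dS_ex by blast
  have "real_of_int (supdist N d x (perm_pt \<pi> b)) \<le> R" using x p by (simp add: cube_def)
  then have le: "supdist N d x (perm_pt \<pi> b) \<le> \<lfloor>R\<rfloor>" by linarith
  have "x \<in> box N d (perm_pt \<pi> b) \<lfloor>R\<rfloor>"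
    unfolding box_def using x supdist_ge[OF assms, of _ _ x "perm_pt \<pi> b"] le
    by (auto simp: cube_def intro: order_trans)
  then show "x \<in> (\<Union>\<pi>\<in>{\<pi>. \<pi> permutes {..<N}}. box N d (perm_pt \<pi> b) \<lfloor>R\<rfloor>)" using p by auto
qed

lemma cube_fin_card:
  assumes "1 \<le> N" "1 \<le> d" "0 \<le> R"
  shows "finite (cube N d R b) \<and> real (card (cube N d R b)) \<le> fact N * (2*R+1) ^ (N*d)"
proof -
  let ?P = "{\<pi>. \<pi> permutes {..<N}}"
  let ?U = "\<Union>\<pi>\<in>?P. box N d (perm_pt \<pi> b) \<lfloor>R\<rfloor>"
  define q where "q = (nat (2*\<lfloor>R\<rfloor>+1)) ^ (N*d)"
  have r0: "0 \<le> \<lfloor>R\<rfloor>" using assms by simp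
  have finP: "finite ?P" using finite_permutations by blast
  have bx: "finite (box N d (perm_pt \<pi> b) \<lfloor>R\<rfloor>) \<and> card (box N d (perm_pt \<pi> b) \<lfloor>R\<rfloor>) \<le> q" for \<pi>
    unfolding q_def by (rule box_fin_card[OF r0])
  have finU: "finite ?U" using finP bx by blast
  have "card ?U \<le> (\<Sum>\<pi>\<in>?P. card (box N d (perm_pt \<pi> b) \<lfloor>R\<rfloor>))" by (rule card_UN_le[OF finP])
  also have "\<dots> \<le> (\<Sum>\<pi>\<in>?P. q)"
    by (rule sum_mono) (use bx in blast)
  also have "\<dots> = card ?P * q" by simp
  also have "card ?P = fact N" using card_permutations[of "{..<N}" N] by simp
  finally have c: "card ?U \<le> fact N * q" .
  have sub: "cube N d R b \<subseteq> ?U" by (rule cube_sub_boxes[OF assms(1,2)])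
  have fin: "finite (cube N d R b)" using finite_subset[OF sub finU] .
  have "card (cube N d R b) \<le> fact N * q"
    using card_mono[OF finU sub] c by (rule order_trans)
  then have "real (card (cube N d R b)) \<le> real (fact N * q)"
    by (simp only: of_nat_le_iff)
  also have "real (fact N * q) = fact N * (real (nat (2*\<lfloor>R\<rfloor>+1))) ^ (N*d)"
    unfolding q_def of_nat_mult of_nat_fact of_nat_power ..
  also have "\<dots> \<le> fact N * (2*R+1) ^ (N*d)"
  proof -
    have "real (nat (2*\<lfloor>R\<rfloor>+1)) \<le> 2*R+1" using r0 by linarith
    then show ?thesis by (intro mult_left_mono power_mono) auto
  qed
  finally show ?thesis using fin by simp
qed

definition nb :: "nat \<Rightarrow> nat \<Rightarrow> pt \<Rightarrow> pt set" where
  "nb N d x = {y \<in> conf N d. l1dist N d y x = 1}"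

lemma l1_coord_le:
  assumes "j < N" "k < d"
  shows "\<bar>x j k - y j k\<bar> \<le> l1dist N d x y"
proof -
  have "\<bar>x j k - y j k\<bar> \<le> (\<Sum>k<d. \<bar>x j k - y j k\<bar>)"
    using assms by (intro member_le_sum) auto
  also have "\<dots> \<le> (\<Sum>j<N. \<Sum>k<d. \<bar>x j k - y j k\<bar>)"
    using assms by (intro member_le_sum[where f="\<lambda>j. \<Sum>k<d. \<bar>x j k - y j k\<bar>"]) (auto intro: sum_nonneg)
  finally show ?thesis by (simp add: l1dist_def)
qed

lemma nb_sub_box: "nb N d x \<subseteq> box N d x 1"
proof
  fix y assume y: "y \<in> nb N d x"
  have "\<bar>y j k - x j k\<bar> \<le> 1" if "j < N" "k < d" for j k
    using l1_coord_le[OF that, of y x] y unfolding nb_def by simp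
  then show "y \<in> box N d x 1" using y unfolding nb_def box_def by blast
qed

lemma nb_fin_card: "finite (nb N d x) \<and> card (nb N d x) \<le> 3 ^ (N*d)"
proof -
  have b: "finite (box N d x 1) \<and> card (box N d x 1) \<le> (nat (2*1+1)) ^ (N*d)"
    by (rule box_fin_card) simp
  have e: "nat (2*1+1) = 3" by simp
  have f: "finite (nb N d x)" using b nb_sub_box[of N d x] finite_subset by blast
  have "card (nb N d x) \<le> card (box N d x 1)" using b nb_sub_box[of N d x] card_mono by blast
  then have "card (nb N d x) \<le> 3 ^ (N*d)" using b unfolding e by linarith
  then show ?thesis using f by blast
qed

lemma nb_supdist: "1 \<le> N \<Longrightarrow> 1 \<le> d \<Longrightarrow> y \<in> nb N d x \<Longrightarrow> supdist N d x y \<le> 1"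
  using nb_sub_box[of N d x] by (intro supdist_le) (auto simp: box_def abs_minus_commute)

lemma nb_dS: "1 \<le> N \<Longrightarrow> 1 \<le> d \<Longrightarrow> y \<in> nb N d x \<Longrightarrow> dS N d x y \<le> 1"
  using nb_supdist[of N d y x] dS_le_supdist[of N d x y] by linarith

lemma l1dist_sym: "l1dist N d x y = l1dist N d y x"
  unfolding l1dist_def by (simp add: abs_minus_commute)


locale hop =
  fixes Th :: "'a set" and T :: "('a \<Rightarrow> complex) \<Rightarrow> 'a \<Rightarrow> complex"
  assumes fin: "finite Th"
  and T_add: "\<And>f g. T (\<lambda>x. f x + g x) = (\<lambda>x. T f x + T g x)"
  and T_scale: "\<And>c f. T (\<lambda>x. c * f x) = (\<lambda>x. c * T f x)"
  and T_supp: "\<And>f x. x \<notin> Th \<Longrightarrow> T f x = 0"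
  and T_herm: "\<And>f g. (\<Sum>x\<in>Th. T f x * cnj (g x)) = (\<Sum>x\<in>Th. f x * cnj (T g x))"
begin

definition inn :: "('a \<Rightarrow> complex) \<Rightarrow> ('a \<Rightarrow> complex) \<Rightarrow> complex" where
  "inn f g = (\<Sum>x\<in>Th. f x * cnj (g x))"

definition nrm2 :: "('a \<Rightarrow> complex) \<Rightarrow> real" where
  "nrm2 f = (\<Sum>x\<in>Th. (cmod (f x))\<^sup>2)"

definition V :: "('a \<Rightarrow> complex) set" where
  "V = {f. \<forall>x. x \<notin> Th \<longrightarrow> f x = 0}"

definition eig :: "('a \<Rightarrow> complex) \<Rightarrow> complex \<Rightarrow> bool" where
  "eig f z \<longleftrightarrow> f \<in> V \<and> (\<forall>x\<in>Th. T f x = z * f x)"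

lemma T_zero: "T (\<lambda>x. 0) = (\<lambda>x. 0)"
  using T_scale[of 0 "\<lambda>x. 0"] by simp

lemma T_neg: "T (\<lambda>x. - f x) = (\<lambda>x. - T f x)"
  using T_scale[of "-1" f] by simp

lemma T_diff: "T (\<lambda>x. f x - g x) = (\<lambda>x. T f x - T g x)"
  using T_add[of f "\<lambda>x. - g x"] T_neg[of g] by simp

lemma T_sum: "finite J \<Longrightarrow> T (\<lambda>x. \<Sum>j\<in>J. h j x) = (\<lambda>x. \<Sum>j\<in>J. T (h j) x)"
proof (induction J rule: finite_induct)
  case empty then show ?case using T_zero by simp
next
  case (insert j J)
  have "T (\<lambda>x. \<Sum>j\<in>insert j J. h j x) = T (\<lambda>x. h j x + (\<Sum>j\<in>J. h j x))"
    using insert by simp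
  also have "\<dots> = (\<lambda>x. T (h j) x + T (\<lambda>x. \<Sum>j\<in>J. h j x) x)" by (rule T_add)
  finally show ?case using insert by simp
qed

lemma T_V: "T f \<in> V" unfolding V_def using T_supp by auto

lemma T_local: "(\<forall>x\<in>Th. f x = g x) \<Longrightarrow> T f = T g"
proof -
  assume a: "\<forall>x\<in>Th. f x = g x"
  have "(\<Sum>x\<in>Th. (T f x - T g x) * cnj (T f x - T g x)) = (\<Sum>x\<in>Th. T (\<lambda>x. f x - g x) x * cnj (T f x - T g x))"
    using T_diff[of f g] by simp
  also have "\<dots> = (\<Sum>x\<in>Th. (f x - g x) * cnj (T (\<lambda>x. T f x - T g x) x))" by (rule T_herm)
  also have "\<dots> = 0" using a by simp
  finally have "(\<Sum>x\<in>Th. of_real ((cmod (T f x - T g x))\<^sup>2)) = (0::complex)"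
    by (simp only: complex_norm_square)
  then have "(\<Sum>x\<in>Th. (cmod (T f x - T g x))\<^sup>2) = 0"
    by (metis of_real_eq_0_iff of_real_sum)
  then have "\<forall>x\<in>Th. (cmod (T f x - T g x))\<^sup>2 = 0"
    using fin by (subst (asm) sum_nonneg_eq_0_iff) auto
  then have "\<forall>x\<in>Th. T f x = T g x" by simp
  then show "T f = T g" using T_supp by (intro ext) (metis)
qed

lemma inn_herm: "inn (T f) g = inn f (T g)"
  unfolding inn_def by (rule T_herm)

lemma inn_scale1: "inn (\<lambda>x. c * f x) g = c * inn f g"
  unfolding inn_def by (simp add: sum_distrib_left mult.assoc)

lemma inn_scale2: "inn f (\<lambda>x. c * g x) = cnj c * inn f g"
  unfolding inn_def by (simp add: sum_distrib_left mult_ac)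

lemma inn_add1: "inn (\<lambda>x. f x + g x) h = inn f h + inn g h"
  unfolding inn_def by (simp add: distrib_right sum.distrib)

lemma inn_diff1: "inn (\<lambda>x. f x - g x) h = inn f h - inn g h"
  unfolding inn_def by (simp add: left_diff_distrib sum_subtractf)

lemma inn_sum1: "inn (\<lambda>x. \<Sum>j\<in>J. h j x) g = (\<Sum>j\<in>J. inn (h j) g)"
  unfolding inn_def by (simp add: sum_distrib_right sum.swap[of _ J])

lemma inn_sum2: "inn g (\<lambda>x. \<Sum>j\<in>J. h j x) = (\<Sum>j\<in>J. inn g (h j))"
  unfolding inn_def by (simp add: sum_distrib_left sum.swap[of _ J])

lemma inn_self: "inn f f = of_real (nrm2 f)"
  unfolding inn_def nrm2_def by (simp only: of_real_sum complex_norm_square)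

lemma inn_local2: "(\<forall>x\<in>Th. g x = g' x) \<Longrightarrow> inn f g = inn f g'"
  unfolding inn_def by simp

lemma nrm2_nonneg: "0 \<le> nrm2 f" unfolding nrm2_def by (simp add: sum_nonneg)

lemma nrm2_zero: "nrm2 f = 0 \<longleftrightarrow> (\<forall>x\<in>Th. f x = 0)"
  unfolding nrm2_def using fin by (subst sum_nonneg_eq_0_iff) auto

lemma nrm2_scale: "nrm2 (\<lambda>x. c * f x) = (cmod c)\<^sup>2 * nrm2 f"
  unfolding nrm2_def by (simp add: sum_distrib_left norm_mult power_mult_distrib)

lemma eig_real:
  assumes "eig f z" "\<exists>x\<in>Th. f x \<noteq> 0"
  shows "cnj z = z"
proof -
  have n: "nrm2 f \<noteq> 0" using assms(2) nrm2_zero by blast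
  have "inn (T f) f = inn (\<lambda>x. z * f x) f" unfolding inn_def using assms(1) eig_def by simp
  also have "\<dots> = z * of_real (nrm2 f)" by (simp add: inn_scale1 inn_self)
  finally have 1: "inn (T f) f = z * of_real (nrm2 f)" .
  have "inn f (T f) = inn f (\<lambda>x. z * f x)" using assms(1) eig_def by (intro inn_local2) simp
  also have "\<dots> = cnj z * of_real (nrm2 f)" by (simp add: inn_scale2 inn_self)
  finally have 2: "inn f (T f) = cnj z * of_real (nrm2 f)" .
  from 1 2 inn_herm[of f f] have "z * of_real (nrm2 f) = cnj z * of_real (nrm2 f)" by metis
  then have "(z - cnj z) * of_real (nrm2 f) = 0" by (simp add: algebra_simps)
  then show ?thesis using n by simp
qed

lemma eig_orth:
  assumes "eig f z" "eig g w" "z \<noteq> w"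
  shows "inn f g = 0"
proof (cases "\<exists>x\<in>Th. g x \<noteq> 0")
  case False
  then show ?thesis unfolding inn_def by simp
next
  case True
  have w: "cnj w = w" by (rule eig_real[OF assms(2) True])
  have "inn (T f) g = z * inn f g"
    using assms(1) unfolding eig_def inn_def by (simp add: sum_distrib_left mult.assoc)
  moreover have "inn f (T g) = w * inn f g"
  proof -
    have "inn f (T g) = inn f (\<lambda>x. w * g x)" using assms(2) eig_def by (intro inn_local2) simp
    then show ?thesis using w by (simp add: inn_scale2)
  qed
  ultimately have "z * inn f g = w * inn f g" using inn_herm by metis
  then have "(z - w) * inn f g = 0" by (simp add: algebra_simps)
  then show ?thesis using assms(3) by simp
qed

lemma eig_scale: "eig f z \<Longrightarrow> eig (\<lambda>x. c * f x) z"
  unfolding eig_def V_def by (simp add: T_scale)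

definition evs :: "('a \<Rightarrow> complex) \<Rightarrow> bool" where
  "evs f \<longleftrightarrow> (\<exists>L g. finite L \<and> (\<forall>z\<in>L. eig (g z) z) \<and> f = (\<lambda>x. \<Sum>z\<in>L. g z x))"

lemma nrm2_sum_orth:
  assumes "finite L" "\<forall>z\<in>L. eig (g z) z"
  shows "nrm2 (\<lambda>x. \<Sum>z\<in>L. g z x) = (\<Sum>z\<in>L. nrm2 (g z))"
proof -
  have "of_real (nrm2 (\<lambda>x. \<Sum>z\<in>L. g z x)) = inn (\<lambda>x. \<Sum>z\<in>L. g z x) (\<lambda>x. \<Sum>z\<in>L. g z x)"
    by (simp add: inn_self)
  also have "\<dots> = (\<Sum>z\<in>L. \<Sum>w\<in>L. inn (g z) (g w))" by (simp add: inn_sum1 inn_sum2)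
  also have "\<dots> = (\<Sum>z\<in>L. inn (g z) (g z))"
  proof (rule sum.cong[OF refl])
    fix z assume z: "z \<in> L"
    have "(\<Sum>w\<in>L. inn (g z) (g w)) = (\<Sum>w\<in>L. if w = z then inn (g z) (g z) else 0)"
    proof (rule sum.cong[OF refl])
      fix w assume w: "w \<in> L"
      show "inn (g z) (g w) = (if w = z then inn (g z) (g z) else 0)"
      proof (cases "w = z")
        case False
        then have "z \<noteq> w" by blast
        then show ?thesis using eig_orth[of "g z" z "g w" w] assms(2) z w False by simp
      qed simp
    qed
    also have "\<dots> = inn (g z) (g z)" using assms(1) z by simp
    finally show "(\<Sum>w\<in>L. inn (g z) (g w)) = inn (g z) (g z)" .
  qed
  also have "\<dots> = of_real (\<Sum>z\<in>L. nrm2 (g z))" by (simp add: inn_self)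
  finally show ?thesis by (simp only: of_real_eq_iff)
qed

end


lemma sum_fun_apply: "(\<Sum>v\<in>A. F v) x = (\<Sum>v\<in>A. F v x)"
proof (cases "finite A")
  case True then show ?thesis by (induction A rule: finite_induct) auto
next
  case False then show ?thesis by simp
qed

context hop begin

definition Tp :: "nat \<Rightarrow> ('a \<Rightarrow> complex) \<Rightarrow> 'a \<Rightarrow> complex" where
  "Tp i f = (T ^^ i) f"

lemma Tp_0[simp]: "Tp 0 f = f" by (simp add: Tp_def)
lemma Tp_Suc: "Tp (Suc i) f = T (Tp i f)" by (simp add: Tp_def)

lemma Tp_add: "Tp i (\<lambda>x. f x + g x) = (\<lambda>x. Tp i f x + Tp i g x)"
  by (induction i) (simp_all add: Tp_Suc T_add)

lemma Tp_scale: "Tp i (\<lambda>x. c * f x) = (\<lambda>x. c * Tp i f x)"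
  by (induction i) (simp_all add: Tp_Suc T_scale)

lemma Tp_T: "Tp i (T f) = T (Tp i f)"
  unfolding Tp_def by (simp add: funpow_swap1)

lemma Tp_V: "f \<in> V \<Longrightarrow> Tp i f \<in> V"
  by (cases i) (simp_all add: Tp_Suc T_V)

definition peval :: "complex poly \<Rightarrow> ('a \<Rightarrow> complex) \<Rightarrow> 'a \<Rightarrow> complex" where
  "peval p f = (\<lambda>x. \<Sum>i\<le>degree p. coeff p i * Tp i f x)"

lemma peval_gen: "degree p \<le> k \<Longrightarrow> peval p f = (\<lambda>x. \<Sum>i\<le>k. coeff p i * Tp i f x)"
  unfolding peval_def
  by (intro ext sum.mono_neutral_left) (auto simp: coeff_eq_0)

lemma peval_add: "peval (p + q) f = (\<lambda>x. peval p f x + peval q f x)"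
proof -
  let ?k = "max (degree p) (degree q)"
  have "degree (p + q) \<le> ?k" by (rule degree_add_le) auto
  then show ?thesis
    using peval_gen[of p ?k f] peval_gen[of q ?k f] peval_gen[of "p+q" ?k f]
    by (simp add: distrib_right sum.distrib)
qed

lemma peval_smult: "peval (smult c p) f = (\<lambda>x. c * peval p f x)"
  using peval_gen[of "smult c p" "degree p" f] peval_gen[of p "degree p" f]
  by (simp add: sum_distrib_left mult.assoc)

lemma peval_pCons0: "peval (pCons 0 p) f = T (peval p f)"
proof -
  have d: "degree (pCons 0 p) \<le> Suc (degree p)" by (simp add: degree_pCons_le)
  have "peval (pCons 0 p) f = (\<lambda>x. \<Sum>i\<le>Suc (degree p). coeff (pCons 0 p) i * Tp i f x)"
    by (rule peval_gen[OF d])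
  also have "\<dots> = (\<lambda>x. \<Sum>i\<le>degree p. coeff p i * T (Tp i f) x)"
    by (rule ext, subst sum.atMost_Suc_shift) (simp add: Tp_Suc del: sum.atMost_Suc)
  also have "\<dots> = T (\<lambda>x. \<Sum>i\<le>degree p. coeff p i * Tp i f x)"
    by (simp add: T_sum T_scale)
  finally show ?thesis unfolding peval_def .
qed

lemma peval_lin: "peval ([:- a, 1:] * q) f = (\<lambda>x. T (peval q f) x - a * peval q f x)"
proof -
  have e: "[:- a, 1:] * q = smult (- a) q + pCons 0 q" by (simp add: mult_pCons_left)
  have "peval ([:- a, 1:] * q) f = (\<lambda>x. (- a) * peval q f x + T (peval q f) x)"
    by (simp only: e peval_add peval_smult peval_pCons0)
  then show ?thesis by simp
qed

lemma peval_const: "peval [:c:] f = (\<lambda>x. c * f x)"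
  unfolding peval_def by simp

lemma peval_fadd: "peval p (\<lambda>x. f x + g x) = (\<lambda>x. peval p f x + peval p g x)"
  unfolding peval_def by (simp add: Tp_add distrib_left sum.distrib)

lemma peval_fscale: "peval p (\<lambda>x. c * f x) = (\<lambda>x. c * peval p f x)"
  unfolding peval_def by (simp add: Tp_scale sum_distrib_left mult_ac)

lemma peval_T: "peval p (T f) = T (peval p f)"
  unfolding peval_def by (simp add: Tp_T T_sum T_scale)

lemma peval_comm: "peval q (\<lambda>x. T f x - a * f x) = (\<lambda>x. T (peval q f) x - a * peval q f x)"
proof -
  have "peval q (\<lambda>x. T f x - a * f x) = peval q (\<lambda>x. T f x + (- a) * f x)" by simp
  also have "\<dots> = (\<lambda>x. peval q (T f) x + peval q (\<lambda>x. (- a) * f x) x)" by (rule peval_fadd)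
  also have "\<dots> = (\<lambda>x. T (peval q f) x + (- a) * peval q f x)" by (simp only: peval_T peval_fscale)
  also have "\<dots> = (\<lambda>x. T (peval q f) x - a * peval q f x)" by simp
  finally show ?thesis .
qed

lemma V_sum: "(\<And>w. w \<in> L \<Longrightarrow> g w \<in> V) \<Longrightarrow> (\<lambda>x. \<Sum>w\<in>L. g w x) \<in> V"
  unfolding V_def by auto

lemma evs_ext:
  assumes fV: "f \<in> V" and ev: "evs (\<lambda>x. T f x - z * f x)"
  shows "evs f"
proof -
  let ?h = "\<lambda>x. T f x - z * f x"
  obtain L g where L: "finite L" "\<forall>w\<in>L. eig (g w) w" and h: "?h = (\<lambda>x. \<Sum>w\<in>L. g w x)"
    using ev unfolding evs_def by blast
  define L' where "L' = {w\<in>L. \<exists>x\<in>Th. g w x \<noteq> 0}"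
  have L'L: "L' \<subseteq> L" unfolding L'_def by auto
  have finL': "finite L'" using L(1) L'L finite_subset by blast
  have eL': "\<forall>w\<in>L'. eig (g w) w" using L(2) L'L by blast
  have h': "?h = (\<lambda>x. \<Sum>w\<in>L'. g w x)"
  proof
    fix x
    have "(\<Sum>w\<in>L. g w x) = (\<Sum>w\<in>L'. g w x)"
    proof (rule sum.mono_neutral_right[OF L(1) L'L], rule ballI)
      fix w assume w: "w \<in> L - L'"
      then have "g w \<in> V" using L(2) eig_def by blast
      then show "g w x = 0" using w unfolding L'_def V_def by auto
    qed
    then show "?h x = (\<Sum>w\<in>L'. g w x)" using h by metis
  qed
  have zL': "z \<notin> L'"
  proof
    assume zin: "z \<in> L'"
    have ez: "eig (g z) z" using eL' zin by blast
    have nz: "\<exists>x\<in>Th. g z x \<noteq> 0" using zin unfolding L'_def by blast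
    have cz: "cnj z = z" by (rule eig_real[OF ez nz])
    have "inn (T f) (g z) = inn f (T (g z))" by (rule inn_herm)
    also have "\<dots> = inn f (\<lambda>x. z * g z x)" using ez eig_def by (intro inn_local2) simp
    also have "\<dots> = z * inn f (g z)" using cz by (simp add: inn_scale2)
    finally have 1: "inn ?h (g z) = 0" by (simp add: inn_diff1 inn_scale1)
    have "inn ?h (g z) = (\<Sum>w\<in>L'. inn (g w) (g z))" unfolding h' by (rule inn_sum1)
    also have "\<dots> = (\<Sum>w\<in>L'. if w = z then inn (g z) (g z) else 0)"
    proof (rule sum.cong[OF refl])
      fix w assume w: "w \<in> L'"
      show "inn (g w) (g z) = (if w = z then inn (g z) (g z) else 0)"
      proof (cases "w = z")
        case False
        then show ?thesis using eig_orth[of "g w" w "g z" z] eL' zin w by simp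
      qed simp
    qed
    also have "\<dots> = inn (g z) (g z)" using finL' zin by simp
    also have "\<dots> = of_real (nrm2 (g z))" by (rule inn_self)
    finally have "nrm2 (g z) = 0" using 1 by simp
    then show False using nz nrm2_zero by blast
  qed
  define f' where "f' = (\<lambda>x. \<Sum>w\<in>L'. (1 / (w - z)) * g w x)"
  have Tf': "T f' = (\<lambda>x. \<Sum>w\<in>L'. (1 / (w - z)) * T (g w) x)"
    unfolding f'_def T_sum[OF finL'] T_scale ..
  have f'eq: "T f' x - z * f' x = ?h x" if x: "x \<in> Th" for x
  proof -
    have t1: "T f' x = (\<Sum>w\<in>L'. (1 / (w - z)) * (w * g w x))"
      unfolding Tf' using eL' x by (intro sum.cong) (auto simp: eig_def)
    have "T f' x - z * f' x = (\<Sum>w\<in>L'. (1 / (w - z)) * (w * g w x) - z * ((1 / (w - z)) * g w x))"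
      unfolding t1 by (simp add: f'_def sum_subtractf sum_distrib_left)
    also have "\<dots> = (\<Sum>w\<in>L'. g w x)"
    proof (rule sum.cong[OF refl])
      fix w assume "w \<in> L'"
      then have "w - z \<noteq> 0" using zL' by auto
      have gen: "\<And>c::complex. c * (w * g w x) - z * (c * g w x) = (c * (w - z)) * g w x"
        by (simp add: algebra_simps)
      have "(1 / (w - z)) * (w * g w x) - z * ((1 / (w - z)) * g w x) = ((1 / (w - z)) * (w - z)) * g w x"
        by (rule gen)
      also have "(1 / (w - z)) * (w - z) = 1" using \<open>w - z \<noteq> 0\<close> by simp
      finally show "(1 / (w - z)) * (w * g w x) - z * ((1 / (w - z)) * g w x) = g w x" by simp
    qed
    finally show ?thesis using h' by metis
  qed
  define e where "e = (\<lambda>x. f x - f' x)"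
  have f'V: "f' \<in> V" unfolding f'_def
    by (rule V_sum) (use eL' in \<open>auto simp: eig_def V_def\<close>)
  have eV: "e \<in> V" using fV f'V unfolding e_def V_def by auto
  have ee: "eig e z"
    unfolding eig_def
  proof (intro conjI eV ballI)
    fix x assume x: "x \<in> Th"
    have "T e x = T f x - T f' x" unfolding e_def by (simp add: T_diff)
    also have "\<dots> = z * e x" using f'eq[OF x] unfolding e_def by (simp add: algebra_simps)
    finally show "T e x = z * e x" .
  qed
  define g2 where "g2 = (\<lambda>w. if w = z then e else (\<lambda>x. (1 / (w - z)) * g w x))"
  have "finite (insert z L')" using finL' by simp
  moreover have "\<forall>w\<in>insert z L'. eig (g2 w) w"
  proof
    fix w assume w: "w \<in> insert z L'"
    show "eig (g2 w) w"
    proof (cases "w = z")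
      case True then show ?thesis using ee unfolding g2_def by simp
    next
      case False
      then have "eig (g w) w" using w eL' by blast
      then have "eig (\<lambda>x. (1 / (w - z)) * g w x) w" by (rule eig_scale)
      then show ?thesis using False unfolding g2_def by simp
    qed
  qed
  moreover have "f = (\<lambda>x. \<Sum>w\<in>insert z L'. g2 w x)"
  proof
    fix x
    have "(\<Sum>w\<in>insert z L'. g2 w x) = g2 z x + (\<Sum>w\<in>L'. g2 w x)"
      using finL' zL' by simp
    also have "(\<Sum>w\<in>L'. g2 w x) = f' x"
      unfolding f'_def g2_def using zL' by (intro sum.cong) auto
    finally show "f x = (\<Sum>w\<in>insert z L'. g2 w x)" unfolding g2_def e_def by simp
  qed
  ultimately show ?thesis unfolding evs_def by blast
qed

lemma evs_zero: "evs (\<lambda>x. 0)"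
  unfolding evs_def by (rule exI[of _ "{}"]) simp

lemma evs_poly: "p \<noteq> 0 \<Longrightarrow> f \<in> V \<Longrightarrow> peval p f = (\<lambda>x. 0) \<Longrightarrow> evs f"
proof (induction "degree p" arbitrary: p f rule: less_induct)
  case less
  show ?case
  proof (cases "degree p = 0")
    case True
    then obtain c where c: "p = [:c:]" by (meson degree_eq_zeroE)
    then have "c \<noteq> 0" using less.prems by simp
    moreover have "(\<lambda>x. c * f x) = (\<lambda>x. 0)" using less.prems(3) c peval_const by simp
    ultimately have "f = (\<lambda>x. 0)" by (metis mult_eq_0_iff)
    then show ?thesis using evs_zero by simp
  next
    case False
    then have "\<not> constant (poly p)" by (simp add: constant_degree)
    then obtain z where "poly p z = 0" using fundamental_theorem_of_algebra by blast
    then have "[:- z, 1:] dvd p" by (simp add: poly_eq_0_iff_dvd)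
    then obtain q where q: "p = [:- z, 1:] * q" by (elim dvdE)
    have q0: "q \<noteq> 0" using less.prems(1) q by auto
    have "degree p = degree [:- z, 1:] + degree q" unfolding q by (rule degree_mult_eq) (simp_all add: q0)
    then have dq: "degree q < degree p" by simp
    have "peval q (\<lambda>x. T f x - z * f x) = (\<lambda>x. 0)"
      using less.prems(3) unfolding q peval_lin peval_comm .
    moreover have "(\<lambda>x. T f x - z * f x) \<in> V" using less.prems(2) T_V unfolding V_def by auto
    ultimately have "evs (\<lambda>x. T f x - z * f x)" using less.hyps[OF dq q0] by blast
    then show ?thesis using evs_ext less.prems(2) by blast
  qed
qed

end


interpretation fvs: vector_space "\<lambda>(c::complex) (f::'a \<Rightarrow> complex). (\<lambda>x. c * f x)"
  by unfold_locales (auto simp: plus_fun_def algebra_simps)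

context hop begin

lemma fun_sum_eq: "(\<Sum>v\<in>A. F v) = (\<lambda>x. \<Sum>v\<in>A. F v x)"
  by (rule ext) (rule sum_fun_apply)

lemma V_span:
  assumes "f \<in> V"
  shows "f \<in> fvs.span ((\<lambda>y. (\<lambda>x. if x = y then 1 else 0)) ` Th)"
proof -
  let ?B = "(\<lambda>y. (\<lambda>x. if x = y then (1::complex) else 0)) ` Th"
  have "f = (\<Sum>y\<in>Th. (\<lambda>x. f y * (if x = y then 1 else 0)))"
  proof (rule ext)
    fix x
    have "(\<Sum>y\<in>Th. (\<lambda>x. f y * (if x = y then 1 else 0))) x = (\<Sum>y\<in>Th. f y * (if x = y then 1 else 0))"
      by (rule sum_fun_apply)
    also have "\<dots> = (if x \<in> Th then f x else 0)"
      using fin by (simp add: if_distrib[of "\<lambda>t. f _ * t"] sum.delta' cong: if_cong)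
    also have "\<dots> = f x" using assms unfolding V_def by auto
    finally show "f x = (\<Sum>y\<in>Th. (\<lambda>x. f y * (if x = y then 1 else 0))) x" by simp
  qed
  also have "\<dots> \<in> fvs.span ?B"
    by (intro fvs.span_sum fvs.span_scale[where c = "f _", simplified] fvs.span_base) auto
  finally show ?thesis .
qed

lemma indep_card:
  assumes "S \<subseteq> V" "fvs.independent S"
  shows "finite S \<and> card S \<le> card Th"
proof -
  let ?B = "(\<lambda>y. (\<lambda>x. if x = y then (1::complex) else 0)) ` Th"
  have "finite S \<and> card S \<le> card ?B"
    by (rule fvs.independent_span_bound) (use fin assms V_span in auto)
  moreover have "card ?B \<le> card Th" by (rule card_image_le[OF fin])
  ultimately show ?thesis by linarith
qed

lemma krylov:
  assumes fV: "f \<in> V"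
  shows "\<exists>p. p \<noteq> 0 \<and> peval p f = (\<lambda>x. 0)"
proof -
  define n where "n = card Th"
  define vs where "vs i = Tp i f" for i
  show ?thesis
  proof (cases "inj_on vs {..n}")
    case True
    let ?S = "vs ` {..n}"
    have cS: "card ?S = Suc n" using card_image[OF True] by simp
    have SV: "?S \<subseteq> V" using Tp_V[OF fV] unfolding vs_def by auto
    have "\<not> fvs.independent ?S"
    proof
      assume "fvs.independent ?S"
      then have "card ?S \<le> card Th" using indep_card[OF SV] by blast
      then show False using cS n_def by simp
    qed
    then obtain t u where t: "finite t" "t \<subseteq> ?S"
      and su: "(\<Sum>v\<in>t. (\<lambda>x. u v * v x)) = 0" and v0: "\<exists>v\<in>t. u v \<noteq> 0"
      unfolding fvs.dependent_explicit by blast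
    define c where "c i = (if vs i \<in> t then u (vs i) else 0)" for i
    define p where "p = (\<Sum>i\<le>n. monom (c i) i)"
    have cp: "coeff p k = (if k \<le> n then c k else 0)" for k
    proof -
      have "coeff p k = (\<Sum>i\<le>n. if i = k then c i else 0)"
        unfolding p_def by (simp add: coeff_sum coeff_monom)
      also have "\<dots> = (if k \<le> n then c k else 0)" by (simp add: sum.delta')
      finally show ?thesis .
    qed
    have dp: "degree p \<le> n" by (rule degree_le) (simp add: cp)
    have p0: "p \<noteq> 0"
    proof
      assume "p = 0"
      obtain v where v: "v \<in> t" "u v \<noteq> 0" using v0 by blast
      then obtain i where i: "i \<le> n" "v = vs i" using t(2) by blast
      have "coeff p i = u v" using cp i v unfolding c_def by simp
      then show False using \<open>p = 0\<close> v by simp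
    qed
    have "peval p f = (\<lambda>x. 0)"
    proof
      fix x
      have "peval p f x = (\<Sum>i\<le>n. c i * vs i x)"
        using peval_gen[OF dp, of f] cp unfolding vs_def by simp
      also have "\<dots> = (\<Sum>i\<le>n. if vs i \<in> t then u (vs i) * vs i x else 0)"
        by (rule sum.cong) (auto simp: c_def)
      also have "\<dots> = (\<Sum>i\<in>{i\<in>{..n}. vs i \<in> t}. u (vs i) * vs i x)"
        by (rule sum.inter_filter[symmetric]) simp
      also have "\<dots> = (\<Sum>v\<in>vs ` {i\<in>{..n}. vs i \<in> t}. u v * v x)"
        by (rule sum.reindex[symmetric, unfolded comp_def]) (rule inj_on_subset[OF True], auto)
      also have "vs ` {i\<in>{..n}. vs i \<in> t} = t" using t(2) by auto
      also have "(\<Sum>v\<in>t. u v * v x) = (\<Sum>v\<in>t. (\<lambda>x. u v * v x)) x" by (simp add: sum_fun_apply)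
      also have "\<dots> = 0" using su by simp
      finally show "peval p f x = 0" .
    qed
    then show ?thesis using p0 by blast
  next
    case False
    then obtain i j where ij: "i \<le> n" "j \<le> n" "i \<noteq> j" "vs i = vs j"
      unfolding inj_on_def by auto
    define p where "p = monom (1::complex) i - monom 1 j"
    have cp: "coeff p k = (if k = i then 1 else 0) - (if k = j then 1 else 0)" for k
      unfolding p_def by (simp add: coeff_monom)
    have p0: "p \<noteq> 0"
    proof
      assume "p = 0"
      then have "coeff p i = 0" by simp
      then show False using cp[of i] ij(3) by simp
    qed
    have dp: "degree p \<le> n" by (rule degree_le) (use ij in \<open>auto simp: cp\<close>)
    have "peval p f = (\<lambda>x. 0)"
    proof
      fix x
      have "peval p f x = (\<Sum>k\<le>n. ((if k = i then 1 else 0) - (if k = j then 1 else 0)) * vs k x)"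
        using peval_gen[OF dp, of f] cp unfolding vs_def by simp
      also have "\<dots> = (\<Sum>k\<le>n. (if k = i then vs k x else 0)) - (\<Sum>k\<le>n. (if k = j then vs k x else 0))"
        by (simp add: left_diff_distrib sum_subtractf if_distrib[of "\<lambda>a. a * _"] cong: if_cong)
      also have "\<dots> = vs i x - vs j x" using ij by (simp add: sum.delta')
      also have "\<dots> = 0" using ij by simp
      finally show "peval p f x = 0" .
    qed
    then show ?thesis using p0 by blast
  qed
qed

lemma evs_all: "f \<in> V \<Longrightarrow> evs f"
  using krylov evs_poly by blast

lemma spectral_bound:
  assumes dpos: "0 < \<delta>"
    and H: "\<And>f z. eig f z \<Longrightarrow> (\<exists>x\<in>Th. f x \<noteq> 0) \<Longrightarrow> \<delta> \<le> cmod (z - of_real \<mu>)"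
    and FV: "F \<in> V"
  shows "\<delta>\<^sup>2 * nrm2 F \<le> nrm2 (\<lambda>x. T F x - of_real \<mu> * F x)"
proof -
  obtain L g where L: "finite L" "\<forall>z\<in>L. eig (g z) z" and F: "F = (\<lambda>x. \<Sum>z\<in>L. g z x)"
    using evs_all[OF FV] unfolding evs_def by blast
  have TF: "T F = (\<lambda>x. \<Sum>z\<in>L. T (g z) x)" unfolding F by (rule T_sum[OF L(1)])
  have "nrm2 (\<lambda>x. T F x - of_real \<mu> * F x) = nrm2 (\<lambda>x. \<Sum>z\<in>L. (z - of_real \<mu>) * g z x)"
    unfolding nrm2_def
  proof (rule sum.cong[OF refl])
    fix x assume x: "x \<in> Th"
    have t1: "T F x = (\<Sum>z\<in>L. z * g z x)"
      unfolding TF using L(2) x by (intro sum.cong) (auto simp: eig_def)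
    have "T F x - of_real \<mu> * F x = (\<Sum>z\<in>L. z * g z x - of_real \<mu> * g z x)"
      unfolding t1 by (simp add: F sum_subtractf sum_distrib_left)
    also have "\<dots> = (\<Sum>z\<in>L. (z - of_real \<mu>) * g z x)" by (simp add: algebra_simps)
    finally show "(cmod (T F x - of_real \<mu> * F x))\<^sup>2 = (cmod (\<Sum>z\<in>L. (z - of_real \<mu>) * g z x))\<^sup>2"
      by simp
  qed
  also have "\<dots> = (\<Sum>z\<in>L. nrm2 (\<lambda>x. (z - of_real \<mu>) * g z x))"
    by (rule nrm2_sum_orth[OF L(1)]) (use L(2) eig_scale in blast)
  also have "\<dots> = (\<Sum>z\<in>L. (cmod (z - of_real \<mu>))\<^sup>2 * nrm2 (g z))" by (simp add: nrm2_scale)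
  finally have 1: "nrm2 (\<lambda>x. T F x - of_real \<mu> * F x) = (\<Sum>z\<in>L. (cmod (z - of_real \<mu>))\<^sup>2 * nrm2 (g z))" .
  have 2: "nrm2 F = (\<Sum>z\<in>L. nrm2 (g z))" unfolding F by (rule nrm2_sum_orth[OF L])
  have "\<delta>\<^sup>2 * nrm2 F = (\<Sum>z\<in>L. \<delta>\<^sup>2 * nrm2 (g z))" unfolding 2 by (simp add: sum_distrib_left)
  also have "\<dots> \<le> (\<Sum>z\<in>L. (cmod (z - of_real \<mu>))\<^sup>2 * nrm2 (g z))"
  proof (rule sum_mono)
    fix z assume z: "z \<in> L"
    show "\<delta>\<^sup>2 * nrm2 (g z) \<le> (cmod (z - of_real \<mu>))\<^sup>2 * nrm2 (g z)"
    proof (cases "\<exists>x\<in>Th. g z x \<noteq> 0")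
      case True
      then have "\<delta> \<le> cmod (z - of_real \<mu>)" using H L(2) z by blast
      then have "\<delta>\<^sup>2 \<le> (cmod (z - of_real \<mu>))\<^sup>2" using dpos by (intro power_mono) auto
      then show ?thesis using nrm2_nonneg by (intro mult_right_mono) auto
    next
      case False
      then have "nrm2 (g z) = 0" using nrm2_zero by blast
      then show ?thesis by simp
    qed
  qed
  finally show ?thesis using 1 by simp
qed

end


lemma Hrestr_nb: "Hrestr N d lam calV calU \<Theta> \<phi> x =
     (if x \<in> \<Theta> then
        - (\<Sum>y \<in> nb N d x. (if y \<in> \<Theta> then \<phi> y else 0))
        + of_real (lam * potV N calV x + potU N calU x) * \<phi> x
      else 0)"
  unfolding Hrestr_def nb_def ..

lemma nb_sum_swap:
  assumes "finite \<Theta>"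
  shows "(\<Sum>y\<in>nb N d x. if y \<in> \<Theta> then a y else 0) = (\<Sum>y\<in>\<Theta>. if y \<in> nb N d x then a y else 0)"
proof -
  have "(\<Sum>y\<in>nb N d x. if y \<in> \<Theta> then a y else 0) = sum a (nb N d x \<inter> \<Theta>)"
    using nb_fin_card[of N d x] by (simp add: sum.inter_restrict)
  also have "\<dots> = sum a (\<Theta> \<inter> nb N d x)" by (simp add: Int_commute)
  also have "\<dots> = (\<Sum>y\<in>\<Theta>. if y \<in> nb N d x then a y else 0)"
    using assms by (simp add: sum.inter_restrict)
  finally show ?thesis .
qed

lemma nb_sym: "x \<in> conf N d \<Longrightarrow> y \<in> conf N d \<Longrightarrow> y \<in> nb N d x \<longleftrightarrow> x \<in> nb N d y"
  unfolding nb_def using l1dist_sym[of N d x y] by auto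

lemma Hrestr_hop:
  assumes fin: "finite \<Theta>" and sub: "\<Theta> \<subseteq> conf N d"
  shows "hop \<Theta> (Hrestr N d lam calV calU \<Theta>)"
proof
  show "finite \<Theta>" by fact
next
  fix f g :: "pt \<Rightarrow> complex"
  show "Hrestr N d lam calV calU \<Theta> (\<lambda>x. f x + g x) = (\<lambda>x. Hrestr N d lam calV calU \<Theta> f x + Hrestr N d lam calV calU \<Theta> g x)"
  proof (rule ext)
    fix x
    have s: "(\<Sum>y\<in>nb N d x. if y \<in> \<Theta> then f y + g y else 0) = (\<Sum>y\<in>nb N d x. if y \<in> \<Theta> then f y else 0) + (\<Sum>y\<in>nb N d x. if y \<in> \<Theta> then g y else 0)"
      unfolding sum.distrib[symmetric] by (rule sum.cong) auto
    show "Hrestr N d lam calV calU \<Theta> (\<lambda>x. f x + g x) x = Hrestr N d lam calV calU \<Theta> f x + Hrestr N d lam calV calU \<Theta> g x"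
      unfolding Hrestr_nb s by (simp add: algebra_simps)
  qed
next
  fix c :: complex and f :: "pt \<Rightarrow> complex"
  show "Hrestr N d lam calV calU \<Theta> (\<lambda>x. c * f x) = (\<lambda>x. c * Hrestr N d lam calV calU \<Theta> f x)"
  proof (rule ext)
    fix x
    have s: "(\<Sum>y\<in>nb N d x. if y \<in> \<Theta> then c * f y else 0) = c * (\<Sum>y\<in>nb N d x. if y \<in> \<Theta> then f y else 0)"
      unfolding sum_distrib_left by (rule sum.cong) auto
    show "Hrestr N d lam calV calU \<Theta> (\<lambda>x. c * f x) x = c * Hrestr N d lam calV calU \<Theta> f x"
      unfolding Hrestr_nb s by (simp add: algebra_simps)
  qed
next
  fix f :: "pt \<Rightarrow> complex" and x
  assume "x \<notin> \<Theta>"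
  then show "Hrestr N d lam calV calU \<Theta> f x = 0" unfolding Hrestr_nb by simp
next
  fix f g :: "pt \<Rightarrow> complex"
  let ?W = "\<lambda>x. complex_of_real (lam * potV N calV x + potU N calU x)"
  let ?A = "\<lambda>x y. if y \<in> nb N d x then (1::complex) else 0"
  have HH: "Hrestr N d lam calV calU \<Theta> h x = - (\<Sum>y\<in>\<Theta>. ?A x y * h y) + ?W x * h x"
    if "x \<in> \<Theta>" for h x
    unfolding Hrestr_nb using that nb_sum_swap[OF fin, where N=N and d=d and x=x and a=h]
    by (simp add: if_distrib[of "\<lambda>t. t * _"] cong: if_cong)
  have Asym: "?A x y = ?A y x" if "x \<in> \<Theta>" "y \<in> \<Theta>" for x y
    using nb_sym[where x=x and N=N and d=d and y=y] that sub by auto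
  have "(\<Sum>x\<in>\<Theta>. Hrestr N d lam calV calU \<Theta> f x * cnj (g x))
      = (\<Sum>x\<in>\<Theta>. - (\<Sum>y\<in>\<Theta>. ?A x y * f y * cnj (g x)) + ?W x * f x * cnj (g x))"
  proof (rule sum.cong[OF refl])
    fix x assume x: "x \<in> \<Theta>"
    have e: "(\<Sum>y\<in>\<Theta>. ?A x y * f y * cnj (g x)) = (\<Sum>y\<in>\<Theta>. ?A x y * f y) * cnj (g x)"
      by (simp add: sum_distrib_right)
    show "Hrestr N d lam calV calU \<Theta> f x * cnj (g x) = - (\<Sum>y\<in>\<Theta>. ?A x y * f y * cnj (g x)) + ?W x * f x * cnj (g x)"
      unfolding HH[OF x] e by (simp only: distrib_right minus_mult_left)
  qed
  also have "\<dots> = - (\<Sum>x\<in>\<Theta>. \<Sum>y\<in>\<Theta>. ?A x y * f y * cnj (g x)) + (\<Sum>x\<in>\<Theta>. ?W x * f x * cnj (g x))"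
    by (simp only: sum.distrib sum_negf)
  also have "(\<Sum>x\<in>\<Theta>. \<Sum>y\<in>\<Theta>. ?A x y * f y * cnj (g x)) = (\<Sum>y\<in>\<Theta>. \<Sum>x\<in>\<Theta>. ?A x y * f y * cnj (g x))"
    by (rule sum.swap)
  also have "\<dots> = (\<Sum>x\<in>\<Theta>. \<Sum>y\<in>\<Theta>. f x * cnj (?A x y * g y))"
    using Asym by (intro sum.cong refl) (auto simp: mult_ac)
  finally have 1: "(\<Sum>x\<in>\<Theta>. Hrestr N d lam calV calU \<Theta> f x * cnj (g x))
      = - (\<Sum>x\<in>\<Theta>. \<Sum>y\<in>\<Theta>. f x * cnj (?A x y * g y)) + (\<Sum>x\<in>\<Theta>. ?W x * f x * cnj (g x))" .
  have "(\<Sum>x\<in>\<Theta>. f x * cnj (Hrestr N d lam calV calU \<Theta> g x))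
      = (\<Sum>x\<in>\<Theta>. - (\<Sum>y\<in>\<Theta>. f x * cnj (?A x y * g y)) + f x * cnj (?W x * g x))"
  proof (rule sum.cong[OF refl])
    fix x assume x: "x \<in> \<Theta>"
    have e: "(\<Sum>y\<in>\<Theta>. f x * cnj (?A x y * g y)) = f x * cnj (\<Sum>y\<in>\<Theta>. ?A x y * g y)"
      by (simp add: sum_distrib_left cnj_sum)
    show "f x * cnj (Hrestr N d lam calV calU \<Theta> g x) = - (\<Sum>y\<in>\<Theta>. f x * cnj (?A x y * g y)) + f x * cnj (?W x * g x)"
      unfolding HH[OF x] e by (simp only: complex_cnj_add complex_cnj_minus distrib_left mult_minus_right)
  qed
  also have "\<dots> = - (\<Sum>x\<in>\<Theta>. \<Sum>y\<in>\<Theta>. f x * cnj (?A x y * g y)) + (\<Sum>x\<in>\<Theta>. f x * cnj (?W x * g x))"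
    by (simp only: sum.distrib sum_negf)
  also have "(\<Sum>x\<in>\<Theta>. f x * cnj (?W x * g x)) = (\<Sum>x\<in>\<Theta>. ?W x * f x * cnj (g x))"
    by (simp add: mult_ac)
  finally show "(\<Sum>x\<in>\<Theta>. Hrestr N d lam calV calU \<Theta> f x * cnj (g x)) =
        (\<Sum>x\<in>\<Theta>. f x * cnj (Hrestr N d lam calV calU \<Theta> g x))" using 1 by simp
qed


lemma H_spec_bound:
  assumes fin: "finite \<Theta>" and sub: "\<Theta> \<subseteq> conf N d" and dpos: "0 < \<delta>"
    and sp: "\<forall>e\<in>spec N d lam calV calU \<Theta>. \<delta> \<le> \<bar>\<mu> - e\<bar>"
    and F: "supp_in \<Theta> F"
  shows "\<delta>\<^sup>2 * (\<Sum>x\<in>\<Theta>. (cmod (F x))\<^sup>2)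
    \<le> (\<Sum>x\<in>\<Theta>. (cmod (Hrestr N d lam calV calU \<Theta> F x - of_real \<mu> * F x))\<^sup>2)"
proof -
  interpret H: hop \<Theta> "Hrestr N d lam calV calU \<Theta>" by (rule Hrestr_hop[OF fin sub])
  have "\<delta>\<^sup>2 * H.nrm2 F \<le> H.nrm2 (\<lambda>x. Hrestr N d lam calV calU \<Theta> F x - of_real \<mu> * F x)"
  proof (rule H.spectral_bound[OF dpos])
    show "F \<in> H.V" using F unfolding H.V_def supp_in_def by auto
  next
    fix f z assume ez: "H.eig f z" and nz: "\<exists>x\<in>\<Theta>. f x \<noteq> 0"
    have cz: "cnj z = z" by (rule H.eig_real[OF ez nz])
    then have "Im z = 0" by (simp add: complex_eq_iff)
    then have zr: "z = of_real (Re z)" by (simp add: complex_eq_iff)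
    have "\<forall>x\<in>\<Theta>. Hrestr N d lam calV calU \<Theta> f x = of_real (Re z) * f x"
      using ez zr unfolding H.eig_def by metis
    then have "is_eigenpair N d lam calV calU \<Theta> f (Re z)"
      unfolding is_eigenpair_def supp_in_def using ez nz unfolding H.eig_def H.V_def by blast
    then have "Re z \<in> spec N d lam calV calU \<Theta>" unfolding spec_def by blast
    then have "\<delta> \<le> \<bar>\<mu> - Re z\<bar>" using sp by blast
    moreover have "cmod (z - of_real \<mu>) = \<bar>\<mu> - Re z\<bar>"
    proof -
      have e: "z - of_real \<mu> = of_real (Re z - \<mu>)" using zr by (metis of_real_diff)
      have "cmod (z - of_real \<mu>) = \<bar>Re z - \<mu>\<bar>" unfolding e norm_of_real ..
      then show ?thesis by (simp add: abs_minus_commute)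
    qed
    ultimately show "\<delta> \<le> cmod (z - of_real \<mu>)" by simp
  qed
  then show ?thesis unfolding H.nrm2_def .
qed

lemma resolvent_id:
  assumes sub: "\<Phi> \<subseteq> \<Lambda>" and x: "x \<in> \<Phi>"
    and eq: "Hrestr N d lam calV calU \<Lambda> \<psi> x = of_real \<mu> * \<psi> x"
  shows "Hrestr N d lam calV calU \<Phi> (\<lambda>y. if y \<in> \<Phi> then \<psi> y else 0) x - of_real \<mu> * (if x \<in> \<Phi> then \<psi> x else 0)
     = (\<Sum>y\<in>nb N d x. if y \<in> \<Lambda> \<and> y \<notin> \<Phi> then \<psi> y else 0)"
proof -
  let ?W = "complex_of_real (lam * potV N calV x + potU N calU x)"
  have xL: "x \<in> \<Lambda>" using sub x by blast
  have 1: "Hrestr N d lam calV calU \<Phi> (\<lambda>y. if y \<in> \<Phi> then \<psi> y else 0) x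
      = - (\<Sum>y\<in>nb N d x. if y \<in> \<Phi> then \<psi> y else 0) + ?W * \<psi> x"
    unfolding Hrestr_nb using x by (simp cong: if_cong)
  have 2: "Hrestr N d lam calV calU \<Lambda> \<psi> x = - (\<Sum>y\<in>nb N d x. if y \<in> \<Lambda> then \<psi> y else 0) + ?W * \<psi> x"
    unfolding Hrestr_nb using xL by simp
  have "Hrestr N d lam calV calU \<Phi> (\<lambda>y. if y \<in> \<Phi> then \<psi> y else 0) x - of_real \<mu> * (if x \<in> \<Phi> then \<psi> x else 0)
     = Hrestr N d lam calV calU \<Phi> (\<lambda>y. if y \<in> \<Phi> then \<psi> y else 0) x - Hrestr N d lam calV calU \<Lambda> \<psi> x"
    using x eq by simp
  also have "\<dots> = (\<Sum>y\<in>nb N d x. if y \<in> \<Lambda> then \<psi> y else 0) - (\<Sum>y\<in>nb N d x. if y \<in> \<Phi> then \<psi> y else 0)"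
    unfolding 1 2 by simp
  also have "\<dots> = (\<Sum>y\<in>nb N d x. (if y \<in> \<Lambda> then \<psi> y else 0) - (if y \<in> \<Phi> then \<psi> y else 0))"
    by (rule sum_subtractf[symmetric])
  also have "\<dots> = (\<Sum>y\<in>nb N d x. if y \<in> \<Lambda> \<and> y \<notin> \<Phi> then \<psi> y else 0)"
    using sub by (intro sum.cong) auto
  finally show ?thesis .
qed

lemma coef_lemma:
  assumes orth: "\<forall>\<phi>\<in>B. \<forall>\<psi>\<in>B. inner_l2 \<Theta> \<phi> \<psi> = (if \<phi> = \<psi> then 1 else 0)"
    and finB: "finite B" and c: "\<forall>x\<in>\<Theta>. f x = (\<Sum>\<phi>\<in>B. c \<phi> * \<phi> x)" and p0: "\<phi>0 \<in> B"
  shows "inner_l2 \<Theta> f \<phi>0 = c \<phi>0"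
proof -
  have "inner_l2 \<Theta> f \<phi>0 = (\<Sum>x\<in>\<Theta>. (\<Sum>\<phi>\<in>B. c \<phi> * \<phi> x) * cnj (\<phi>0 x))"
    unfolding inner_l2_def using c by (intro sum.cong) auto
  also have "\<dots> = (\<Sum>\<phi>\<in>B. c \<phi> * inner_l2 \<Theta> \<phi> \<phi>0)"
    unfolding inner_l2_def by (simp add: sum_distrib_right sum_distrib_left sum.swap[of _ B] mult_ac)
  also have "\<dots> = (\<Sum>\<phi>\<in>B. if \<phi> = \<phi>0 then c \<phi> else 0)"
    using orth p0 by (intro sum.cong) auto
  also have "\<dots> = c \<phi>0" using finB p0 by simp
  finally show ?thesis .
qed


lemma inner_self_l2: "inner_l2 \<Theta> f f = of_real (\<Sum>x\<in>\<Theta>. (cmod (f x))\<^sup>2)"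
  unfolding inner_l2_def by (simp only: of_real_sum complex_norm_square)

lemma basis_card:
  assumes fin: "finite \<Theta>" and finB: "finite B"
    and orth: "\<forall>\<phi>\<in>B. \<forall>\<psi>\<in>B. inner_l2 \<Theta> \<phi> \<psi> = (if \<phi> = \<psi> then 1 else 0)"
    and compl: "\<forall>f. supp_in \<Theta> f \<longrightarrow> (\<exists>c. \<forall>x\<in>\<Theta>. f x = (\<Sum>\<phi>\<in>B. c \<phi> * \<phi> x))"
  shows "card B = card \<Theta>"
proof -
  have col: "(\<Sum>\<phi>\<in>B. (cmod (\<phi> x))\<^sup>2) = 1" if x: "x \<in> \<Theta>" for x
  proof -
    let ?d = "\<lambda>y. if y = x then (1::complex) else 0"
    have "supp_in \<Theta> ?d" unfolding supp_in_def using x by auto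
    then obtain c where c: "\<forall>y\<in>\<Theta>. ?d y = (\<Sum>\<phi>\<in>B. c \<phi> * \<phi> y)" using compl by blast
    have cc: "c \<phi> = cnj (\<phi> x)" if p: "\<phi> \<in> B" for \<phi>
    proof -
      have "c \<phi> = inner_l2 \<Theta> ?d \<phi>" using coef_lemma[OF orth finB c p] by simp
      also have "\<dots> = cnj (\<phi> x)" unfolding inner_l2_def using fin x
        by (simp add: if_distrib[of "\<lambda>t. t * _"] sum.delta cong: if_cong)
      finally show ?thesis .
    qed
    have "(1::complex) = (\<Sum>\<phi>\<in>B. c \<phi> * \<phi> x)" using c x by force
    also have "\<dots> = (\<Sum>\<phi>\<in>B. of_real ((cmod (\<phi> x))\<^sup>2))"
    proof (rule sum.cong[OF refl])
      fix \<phi> assume "\<phi> \<in> B"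
      then have "c \<phi> * \<phi> x = \<phi> x * cnj (\<phi> x)" using cc by (simp add: mult.commute)
      then show "c \<phi> * \<phi> x = of_real ((cmod (\<phi> x))\<^sup>2)" by (simp only: complex_norm_square)
    qed
    finally have "(1::complex) = of_real (\<Sum>\<phi>\<in>B. (cmod (\<phi> x))\<^sup>2)" by simp
    then show ?thesis by (metis of_real_eq_1_iff)
  qed
  have row: "(\<Sum>x\<in>\<Theta>. (cmod (\<phi> x))\<^sup>2) = 1" if p: "\<phi> \<in> B" for \<phi>
  proof -
    have "inner_l2 \<Theta> \<phi> \<phi> = 1" using orth p by simp
    then show ?thesis unfolding inner_self_l2 by (metis of_real_eq_1_iff)
  qed
  have "real (card B) = (\<Sum>\<phi>\<in>B. \<Sum>x\<in>\<Theta>. (cmod (\<phi> x))\<^sup>2)" using row by simp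
  also have "\<dots> = (\<Sum>x\<in>\<Theta>. \<Sum>\<phi>\<in>B. (cmod (\<phi> x))\<^sup>2)" by (rule sum.swap)
  also have "\<dots> = real (card \<Theta>)" using col by simp
  finally show ?thesis by simp
qed

lemma cube_expand:
  assumes fin: "finite \<Theta>" and sub: "\<Theta> \<subseteq> conf N d" and finB: "finite B"
    and Bsupp: "\<forall>\<phi>\<in>B. supp_in \<Theta> \<phi>"
    and Bev: "\<forall>\<phi>\<in>B. \<forall>x\<in>\<Theta>. Hrestr N d lam calV calU \<Theta> \<phi> x = of_real (ev \<phi>) * \<phi> x"
    and orth: "\<forall>\<phi>\<in>B. \<forall>\<psi>\<in>B. inner_l2 \<Theta> \<phi> \<psi> = (if \<phi> = \<psi> then 1 else 0)"
    and compl: "\<forall>f. supp_in \<Theta> f \<longrightarrow> (\<exists>c. \<forall>x\<in>\<Theta>. f x = (\<Sum>\<phi>\<in>B. c \<phi> * \<phi> x))"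
    and dpos: "0 < \<delta>" and gap: "\<forall>\<phi>\<in>B. \<delta> \<le> \<bar>\<mu> - ev \<phi>\<bar>"
    and F: "supp_in \<Theta> F" and v: "v \<in> \<Theta>"
  shows "cmod (F v) \<le> (1/\<delta>) * (\<Sum>\<phi>\<in>B. \<Sum>w\<in>\<Theta>.
            cmod (Hrestr N d lam calV calU \<Theta> F w - of_real \<mu> * F w) * cmod (\<phi> w) * cmod (\<phi> v))"
proof -
  interpret H: hop \<Theta> "Hrestr N d lam calV calU \<Theta>" by (rule Hrestr_hop[OF fin sub])
  have innE: "H.inn f g = inner_l2 \<Theta> f g" for f g unfolding H.inn_def inner_l2_def ..
  let ?T = "Hrestr N d lam calV calU \<Theta>"
  let ?G = "\<lambda>w. ?T F w - of_real \<mu> * F w"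
  obtain c where c: "\<forall>x\<in>\<Theta>. F x = (\<Sum>\<phi>\<in>B. c \<phi> * \<phi> x)" using compl F by blast
  have cb: "cmod (c \<phi>) \<le> (1/\<delta>) * (\<Sum>w\<in>\<Theta>. cmod (?G w) * cmod (\<phi> w))" if p: "\<phi> \<in> B" for \<phi>
  proof -
    have cF: "inner_l2 \<Theta> F \<phi> = c \<phi>" by (rule coef_lemma[OF orth finB c p])
    have "H.inn ?G \<phi> = H.inn (?T F) \<phi> - of_real \<mu> * H.inn F \<phi>"
      by (simp only: H.inn_diff1 H.inn_scale1)
    also have "H.inn (?T F) \<phi> = H.inn F (?T \<phi>)" by (rule H.inn_herm)
    also have "\<dots> = H.inn F (\<lambda>x. of_real (ev \<phi>) * \<phi> x)" using Bev p by (intro H.inn_local2) auto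
    also have "\<dots> = of_real (ev \<phi>) * c \<phi>" using cF by (simp add: H.inn_scale2 innE)
    finally have "inner_l2 \<Theta> ?G \<phi> = of_real (ev \<phi> - \<mu>) * c \<phi>" using cF by (simp add: innE algebra_simps)
    then have "cmod (inner_l2 \<Theta> ?G \<phi>) = cmod (of_real (ev \<phi> - \<mu>)) * cmod (c \<phi>)" by (simp only: norm_mult)
    then have "cmod (inner_l2 \<Theta> ?G \<phi>) = \<bar>ev \<phi> - \<mu>\<bar> * cmod (c \<phi>)" by (simp only: norm_of_real)
    moreover have "\<delta> \<le> \<bar>ev \<phi> - \<mu>\<bar>" using gap p by (simp add: abs_minus_commute)
    ultimately have "\<delta> * cmod (c \<phi>) \<le> cmod (inner_l2 \<Theta> ?G \<phi>)" by (simp add: mult_right_mono)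
    moreover have "cmod (inner_l2 \<Theta> ?G \<phi>) \<le> (\<Sum>w\<in>\<Theta>. cmod (?G w) * cmod (\<phi> w))"
      unfolding inner_l2_def by (rule order_trans[OF norm_sum]) (simp add: norm_mult)
    ultimately have "\<delta> * cmod (c \<phi>) \<le> (\<Sum>w\<in>\<Theta>. cmod (?G w) * cmod (\<phi> w))" by linarith
    then show ?thesis using dpos by (simp add: field_simps)
  qed
  have "cmod (F v) = cmod (\<Sum>\<phi>\<in>B. c \<phi> * \<phi> v)" using c v by simp
  also have "\<dots> \<le> (\<Sum>\<phi>\<in>B. cmod (c \<phi>) * cmod (\<phi> v))" by (rule order_trans[OF norm_sum]) (simp add: norm_mult)
  also have "\<dots> \<le> (\<Sum>\<phi>\<in>B. ((1/\<delta>) * (\<Sum>w\<in>\<Theta>. cmod (?G w) * cmod (\<phi> w))) * cmod (\<phi> v))"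
    by (intro sum_mono mult_right_mono cb) auto
  also have "\<dots> = (1/\<delta>) * (\<Sum>\<phi>\<in>B. \<Sum>w\<in>\<Theta>. cmod (?G w) * cmod (\<phi> w) * cmod (\<phi> v))"
    by (simp add: sum_distrib_left sum_distrib_right mult_ac)
  finally show ?thesis .
qed


lemma perm_inv_pt: "\<pi> permutes {..<N} \<Longrightarrow> perm_pt (inv \<pi>) (perm_pt \<pi> y) = y"
  by (simp add: perm_pt_def permutes_inverses)

lemma perm_inv_pt2: "\<pi> permutes {..<N} \<Longrightarrow> perm_pt \<pi> (perm_pt (inv \<pi>) y) = y"
  by (simp add: perm_pt_def permutes_inverses)

lemma conf_ne:
  assumes "p \<in> conf N d" "q \<in> conf N d" "p \<noteq> q"
  shows "\<exists>j k. j < N \<and> k < d \<and> p j k \<noteq> q j k"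
  using conf_eqI[OF assms(1,2)] assms(3) by blast

lemma sum_delta2:
  fixes N d j k :: nat
  assumes "j < N" "k < d"
  shows "(\<Sum>j'<N. \<Sum>k'<d. if j' = j \<and> k' = k then (1::int) else 0) = 1"
proof -
  have "(\<Sum>j'<N. \<Sum>k'<d. if j' = j \<and> k' = k then (1::int) else 0) = (\<Sum>j'<N. if j' = j then 1 else 0)"
  proof (rule sum.cong[OF refl])
    fix j' assume "j' \<in> {..<N}"
    show "(\<Sum>k'<d. if j' = j \<and> k' = k then (1::int) else 0) = (if j' = j then 1 else 0)"
    proof (cases "j' = j")
      case True then show ?thesis using assms by (simp add: sum.delta[OF finite_lessThan])
    qed simp
  qed
  also have "\<dots> = 1" using assms by (subst sum.delta) auto
  finally show ?thesis .
qed

lemma path_step: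
  fixes p q :: pt
  assumes N: "1 \<le> N" "1 \<le> d" and pc: "p \<in> conf N d" and qc: "q \<in> conf N d" and jk: "j < N" "k < d"
    and ne: "p j k \<noteq> q j k"
  defines "p2 \<equiv> p(j := (p j)(k := p j k + sgn (q j k - p j k)))"
  shows "p2 \<in> conf N d" "l1dist N d p2 p = 1" "l1dist N d p2 q = l1dist N d p q - 1"
    "supdist N d p2 x0 \<le> max (supdist N d p x0) (supdist N d q x0)"
proof -
  show "p2 \<in> conf N d" using pc jk unfolding conf_def p2_def by auto
  have d1: "\<bar>p2 j' k' - p j' k'\<bar> = (if j' = j \<and> k' = k then 1 else 0)" for j' k'
    using ne unfolding p2_def by (auto simp: sgn_if)
  show "l1dist N d p2 p = 1" unfolding l1dist_def d1 using sum_delta2[OF jk] .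
  have d2: "\<bar>p2 j' k' - q j' k'\<bar> = \<bar>p j' k' - q j' k'\<bar> - (if j' = j \<and> k' = k then 1 else 0)" for j' k'
    using ne unfolding p2_def by (auto simp: sgn_if)
  have "l1dist N d p2 q = (\<Sum>j'<N. \<Sum>k'<d. \<bar>p j' k' - q j' k'\<bar>) - (\<Sum>j'<N. \<Sum>k'<d. if j' = j \<and> k' = k then 1 else 0)"
    unfolding l1dist_def d2 by (simp add: sum_subtractf)
  then show "l1dist N d p2 q = l1dist N d p q - 1" using sum_delta2[OF jk] unfolding l1dist_def by simp
  show "supdist N d p2 x0 \<le> max (supdist N d p x0) (supdist N d q x0)"
  proof (rule supdist_le[OF N])
    fix j' k' assume jk': "j' < N" "k' < d"
    have a: "\<bar>p j' k' - x0 j' k'\<bar> \<le> supdist N d p x0" "\<bar>q j' k' - x0 j' k'\<bar> \<le> supdist N d q x0"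
      using supdist_ge[OF N jk'] by auto
    show "\<bar>p2 j' k' - x0 j' k'\<bar> \<le> max (supdist N d p x0) (supdist N d q x0)"
    proof (cases "j' = j \<and> k' = k")
      case True
      then show ?thesis using a ne unfolding p2_def by (auto simp: sgn_if)
    next
      case False
      then have "p2 j' k' = p j' k'" unfolding p2_def by auto
      then show ?thesis using a by simp
    qed
  qed
qed

lemma path_lemma:
  assumes N: "1 \<le> N" "1 \<le> d"
  shows "nat (l1dist N d p q) = n \<Longrightarrow> p \<in> conf N d \<Longrightarrow> q \<in> conf N d \<Longrightarrow>
    real_of_int (supdist N d p x0) \<le> L \<Longrightarrow> real_of_int (supdist N d q x0) \<le> L \<Longrightarrow>
    p \<in> \<Phi> \<Longrightarrow> q \<notin> \<Phi> \<Longrightarrow>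
    \<exists>u\<in>\<Phi>. \<exists>v. v \<in> conf N d \<and> real_of_int (supdist N d v x0) \<le> L \<and> v \<notin> \<Phi> \<and> v \<in> nb N d u"
proof (induction n arbitrary: p)
  case 0
  then have "p \<noteq> q" by blast
  then obtain j k where jk: "j < N" "k < d" "p j k \<noteq> q j k" using conf_ne 0 by blast
  have "\<bar>p j k - q j k\<bar> \<le> l1dist N d p q" by (rule l1_coord_le[OF jk(1,2)])
  then show ?case using 0 jk by simp
next
  case (Suc n)
  then have "p \<noteq> q" by blast
  then obtain j k where jk: "j < N" "k < d" "p j k \<noteq> q j k" using conf_ne Suc by blast
  define p2 where "p2 = p(j := (p j)(k := p j k + sgn (q j k - p j k)))"
  note st = path_step[OF N Suc.prems(2,3) jk, folded p2_def]
  have p2b: "real_of_int (supdist N d p2 x0) \<le> L"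
    using st(4)[of x0] Suc.prems(4,5) by linarith
  show ?case
  proof (cases "p2 \<in> \<Phi>")
    case False
    have "p2 \<in> nb N d p" unfolding nb_def using st(1,2) by simp
    then show ?thesis using Suc.prems(6) False st(1) p2b by blast
  next
    case True
    have "nat (l1dist N d p2 q) = n" using st(3) Suc.prems(1) by simp
    then show ?thesis using Suc.IH[of p2] st(1) Suc.prems(3,5,7) p2b True by blast
  qed
qed

lemma connect:
  assumes N: "1 \<le> N" "1 \<le> d"
    and sub: "\<Phi> \<subseteq> cube N d L x0" and sym: "symmetric_set N \<Phi>"
    and p: "p \<in> \<Phi>" and q: "q \<in> cube N d L x0" "q \<notin> \<Phi>"
  shows "\<exists>u\<in>\<Phi>. \<exists>v\<in>cube N d L x0 - \<Phi>. v \<in> nb N d u"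
proof -
  have pc: "p \<in> cube N d L x0" using sub p by blast
  obtain \<pi> where pi: "\<pi> permutes {..<N}" "dS N d p x0 = supdist N d p (perm_pt \<pi> x0)" using dS_ex by blast
  obtain \<sigma> where si: "\<sigma> permutes {..<N}" "dS N d q x0 = supdist N d q (perm_pt \<sigma> x0)" using dS_ex by blast
  let ?p = "perm_pt (inv \<pi>) p" and ?q = "perm_pt (inv \<sigma>) q"
  have ip: "inv \<pi> permutes {..<N}" and isg: "inv \<sigma> permutes {..<N}" using pi si permutes_inv by blast+
  have pconf: "?p \<in> conf N d" using perm_conf[OF ip] pc unfolding cube_def by blast
  have qconf: "?q \<in> conf N d" using perm_conf[OF isg] q unfolding cube_def by blast
  have "supdist N d ?p x0 = supdist N d ?p (perm_pt (inv \<pi>) (perm_pt \<pi> x0))" using perm_inv_pt[OF pi(1)] by simp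
  also have "\<dots> = supdist N d p (perm_pt \<pi> x0)" by (rule supdist_perm[OF N ip])
  finally have pb: "real_of_int (supdist N d ?p x0) \<le> L" using pi(2) pc unfolding cube_def by simp
  have "supdist N d ?q x0 = supdist N d ?q (perm_pt (inv \<sigma>) (perm_pt \<sigma> x0))" using perm_inv_pt[OF si(1)] by simp
  also have "\<dots> = supdist N d q (perm_pt \<sigma> x0)" by (rule supdist_perm[OF N isg])
  finally have qb: "real_of_int (supdist N d ?q x0) \<le> L" using si(2) q unfolding cube_def by simp
  have pP: "?p \<in> \<Phi>" using sym p ip unfolding symmetric_set_def by blast
  have qP: "?q \<notin> \<Phi>"
  proof
    assume "?q \<in> \<Phi>"
    then have "perm_pt \<sigma> ?q \<in> \<Phi>" using sym si(1) unfolding symmetric_set_def by blast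
    then show False using perm_inv_pt2[OF si(1)] q(2) by simp
  qed
  obtain u v where uv: "u \<in> \<Phi>" "v \<in> conf N d" "real_of_int (supdist N d v x0) \<le> L" "v \<notin> \<Phi>" "v \<in> nb N d u"
    using path_lemma[OF N refl pconf qconf pb qb pP qP] by blast
  have "dS N d v x0 \<le> L" using dS_le_supdist[of N d v x0] uv(3) by linarith
  then have "v \<in> cube N d L x0" using uv(2) unfolding cube_def by blast
  then show ?thesis using uv by blast
qed

definition s0 :: "nat \<Rightarrow> pt \<Rightarrow> int" where "s0 N x = (\<Sum>j<N. x j 0)"

lemma s0_perm: "\<pi> permutes {..<N} \<Longrightarrow> s0 N (perm_pt \<pi> x) = s0 N x"
  unfolding s0_def perm_pt_def using sum.permute[of \<pi> "{..<N}" "\<lambda>j. x j 0"] by (simp add: comp_def)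

lemma s0_lip:
  assumes N: "1 \<le> N" "1 \<le> d"
  shows "\<bar>s0 N x - s0 N y\<bar> \<le> int N * supdist N d x y"
proof -
  have "\<bar>s0 N x - s0 N y\<bar> = \<bar>\<Sum>j<N. x j 0 - y j 0\<bar>" unfolding s0_def by (simp add: sum_subtractf)
  also have "\<dots> \<le> (\<Sum>j<N. \<bar>x j 0 - y j 0\<bar>)" by (rule sum_abs)
  also have "\<dots> \<le> (\<Sum>j<N. supdist N d x y)" using supdist_ge[OF N] N by (intro sum_mono) auto
  finally show ?thesis by simp
qed

lemma s0_dS:
  assumes N: "1 \<le> N" "1 \<le> d"
  shows "real_of_int \<bar>s0 N x - s0 N y\<bar> \<le> real N * dS N d x y"
proof -
  obtain \<pi> where pi: "\<pi> permutes {..<N}" "dS N d x y = supdist N d x (perm_pt \<pi> y)" using dS_ex by blast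
  have "\<bar>s0 N x - s0 N (perm_pt \<pi> y)\<bar> \<le> int N * supdist N d x (perm_pt \<pi> y)" by (rule s0_lip[OF N])
  then have i: "\<bar>s0 N x - s0 N y\<bar> \<le> int N * supdist N d x (perm_pt \<pi> y)"
    using s0_perm[OF pi(1)] by simp
  have "real_of_int \<bar>s0 N x - s0 N y\<bar> \<le> real_of_int (int N * supdist N d x (perm_pt \<pi> y))"
    using i by (simp only: of_int_le_iff)
  also have "\<dots> = real N * dS N d x y" using pi(2) by simp
  finally show ?thesis .
qed

lemma far_point:
  assumes N: "1 \<le> N" "1 \<le> d" and x0: "x0 \<in> conf N d" and ell: "0 \<le> ell" and L: "ell + 1 \<le> L"
  shows "\<exists>z\<in>cube N d L x0. ell < dS N d z a"
proof -
  define t where "t = (if s0 N a \<le> s0 N x0 then \<lfloor>L\<rfloor> else - \<lfloor>L\<rfloor>)"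
  define z where "z = (\<lambda>j k. x0 j k + (if j < N \<and> k = 0 then t else 0))"
  have L0: "0 \<le> \<lfloor>L\<rfloor>" using ell L by linarith
  have zc: "z \<in> conf N d" using x0 N unfolding conf_def z_def by auto
  have "supdist N d z x0 \<le> \<lfloor>L\<rfloor>"
    by (rule supdist_le[OF N]) (use L0 in \<open>auto simp: z_def t_def\<close>)
  then have "dS N d z x0 \<le> L" using dS_le_supdist[of N d z x0] by linarith
  then have zC: "z \<in> cube N d L x0" using zc unfolding cube_def by blast
  have sz: "s0 N z = s0 N x0 + int N * t" unfolding s0_def z_def by (simp add: sum.distrib)
  have nn: "0 \<le> int N * \<lfloor>L\<rfloor>" using L0 by simp
  have "int N * \<lfloor>L\<rfloor> \<le> \<bar>s0 N z - s0 N a\<bar>"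
  proof (cases "s0 N a \<le> s0 N x0")
    case True
    then have "s0 N z - s0 N a = (s0 N x0 - s0 N a) + int N * \<lfloor>L\<rfloor>" by (simp add: sz t_def)
    then have "int N * \<lfloor>L\<rfloor> \<le> s0 N z - s0 N a" using True by linarith
    then show ?thesis by linarith
  next
    case False
    then have "s0 N a - s0 N z = (s0 N a - s0 N x0) + int N * \<lfloor>L\<rfloor>" by (simp add: sz t_def)
    then have "int N * \<lfloor>L\<rfloor> \<le> s0 N a - s0 N z" using False by linarith
    then show ?thesis by linarith
  qed
  then have "real_of_int (int N * \<lfloor>L\<rfloor>) \<le> real_of_int \<bar>s0 N z - s0 N a\<bar>" by (simp only: of_int_le_iff)
  also have "\<dots> \<le> real N * dS N d z a" by (rule s0_dS[OF N])
  finally have "real N * \<lfloor>L\<rfloor> \<le> real N * dS N d z a" by simp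
  then have "\<lfloor>L\<rfloor> \<le> dS N d z a" using N by simp
  then have "ell < dS N d z a" using L by linarith
  then show ?thesis using zC by blast
qed


lemma pow_exp_bound:
  fixes x b :: real and n :: nat
  assumes "0 < x" "real n * ln x \<le> b"
  shows "x ^ n \<le> exp b"
proof -
  have "x ^ n = exp (real n * ln x)" using assms(1) by (simp add: exp_of_nat_mult)
  then show ?thesis using assms(2) by simp
qed

lemma numeric:
  fixes ell m \<tau> \<gamma> \<beta> :: real and N d :: nat
  assumes ell1: "1 \<le> ell" and N1: "1 \<le> N" and d1: "1 \<le> d" and Nle: "real N \<le> ell powr \<tau>"
    and tau: "0 < \<tau>" "\<tau> < 1" and gam: "1 < \<gamma>" "\<gamma> < 2" and m0: "0 < m" and b0: "0 < \<beta>"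
    and Q: "ln 4 + 2 * ell powr (\<gamma> * \<beta>) + 3 * (ell powr \<tau> * ln ell) + 5 * real d * (ell powr \<tau> * ln (3 * ell\<^sup>2))
            + 2 * m + m * ell powr \<tau> \<le> m * ell / 2"
  shows "(2 * exp ((ell powr \<gamma>) powr \<beta>))\<^sup>2 * (fact N * (2 * ell powr \<gamma> + 1) ^ (N * d))
     * (fact N * (2 * ell + 1) ^ (N * d))\<^sup>2 * 9 ^ (N * d) * exp (- m * (ell - 2 - ell powr \<tau>))
     \<le> exp (- m * ell / 2)"
proof -
  let ?t = "ell powr \<tau>"
  let ?D = "real d * (?t * ln (3 * ell\<^sup>2))"
  have ell0: "0 < ell" using ell1 by simp
  have lnell: "0 \<le> ln ell" using ell1 by simp
  have "?t \<le> ell powr 1" by (rule powr_mono) (use tau ell1 in auto)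
  then have tle: "?t \<le> ell" using ell0 by simp
  have N0: "0 < real N" using N1 by simp
  have lnN: "ln (real N) \<le> ln ell" using Nle tle N0 by simp
  have "1 \<le> ell\<^sup>2" using ell1 by (simp add: one_le_power)
  then have ln3: "0 \<le> ln (3 * ell\<^sup>2)" by simp
  have f1: "fact N \<le> exp (?t * ln ell)"
  proof -
    have "(fact N :: real) \<le> real (N ^ N)" by (rule fact_le_power)
    also have "\<dots> = real N ^ N" by simp
    also have "\<dots> \<le> exp (?t * ln ell)"
    proof (rule pow_exp_bound[OF N0])
      have "real N * ln (real N) \<le> ?t * ln (real N)" using Nle N1 by (intro mult_right_mono) auto
      also have "\<dots> \<le> ?t * ln ell" using lnN by (intro mult_left_mono) auto
      finally show "real N * ln (real N) \<le> ?t * ln ell" .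
    qed
    finally show ?thesis .
  qed
  have ND: "real (N * d) * ln (3 * ell\<^sup>2) \<le> ?D"
  proof -
    have "real (N * d) * ln (3 * ell\<^sup>2) = real d * (real N * ln (3 * ell\<^sup>2))" by simp
    also have "\<dots> \<le> ?D" using Nle ln3 by (intro mult_left_mono mult_right_mono) auto
    finally show ?thesis .
  qed
  have gL: "ell powr \<gamma> \<le> ell\<^sup>2"
  proof -
    have "ell powr \<gamma> \<le> ell powr 2" using ell1 gam by (intro powr_mono) auto
    moreover have "ell powr (real 2) = ell ^ 2" by (rule powr_realpow[OF ell0])
    ultimately show ?thesis by simp
  qed
  have e1: "1 \<le> ell\<^sup>2" using ell1 by (simp add: one_le_power)
  have f2: "(2 * ell powr \<gamma> + 1) ^ (N * d) \<le> exp ?D"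
  proof (rule pow_exp_bound)
    have "0 \<le> ell powr \<gamma>" by simp
    then show "0 < 2 * ell powr \<gamma> + 1" by linarith
    have "2 * ell powr \<gamma> + 1 \<le> 3 * ell\<^sup>2" using gL e1 by linarith
    moreover have p1: "0 < 2 * ell powr \<gamma> + 1" using powr_ge_zero[of ell \<gamma>] by linarith
    moreover have p2: "0 < 3 * ell\<^sup>2" using ell0 by simp
    ultimately have "ln (2 * ell powr \<gamma> + 1) \<le> ln (3 * ell\<^sup>2)" using ln_le_cancel_iff[OF p1 p2] by blast
    then have "real (N * d) * ln (2 * ell powr \<gamma> + 1) \<le> real (N * d) * ln (3 * ell\<^sup>2)"
      by (intro mult_left_mono) auto
    then show "real (N * d) * ln (2 * ell powr \<gamma> + 1) \<le> ?D" using ND by linarith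
  qed
  have f3: "(2 * ell + 1) ^ (N * d) \<le> exp ?D"
  proof (rule pow_exp_bound)
    show "0 < 2 * ell + 1" using ell0 by simp
    have "ell \<le> ell\<^sup>2" using ell1 by (simp add: power2_eq_square)
    then have "2 * ell + 1 \<le> 3 * ell\<^sup>2" using e1 by linarith
    then have "ln (2 * ell + 1) \<le> ln (3 * ell\<^sup>2)" using ell0 by simp
    then have "real (N * d) * ln (2 * ell + 1) \<le> real (N * d) * ln (3 * ell\<^sup>2)"
      by (intro mult_left_mono) auto
    then show "real (N * d) * ln (2 * ell + 1) \<le> ?D" using ND by linarith
  qed
  have f4: "(9::real) ^ (N * d) \<le> exp (2 * ?D)"
  proof (rule pow_exp_bound)
    show "(0::real) < 9" by simp
    have "ln ((3::real) ^ 2) = real 2 * ln 3" by (rule ln_realpow)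
    then have "ln (9::real) = 2 * ln 3" by simp
    also have "\<dots> \<le> 2 * ln (3 * ell\<^sup>2)"
    proof -
      have "ln (3::real) \<le> ln (3 * ell\<^sup>2)" using e1 ell0 by (subst ln_le_cancel_iff) auto
      then show ?thesis by simp
    qed
    finally have "real (N * d) * ln 9 \<le> real (N * d) * (2 * ln (3 * ell\<^sup>2))" by (intro mult_left_mono) auto
    then show "real (N * d) * ln 9 \<le> 2 * ?D" using ND by linarith
  qed
  have f0: "(2 * exp ((ell powr \<gamma>) powr \<beta>))\<^sup>2 = exp (ln 4 + 2 * ell powr (\<gamma> * \<beta>))"
  proof -
    have "(ell powr \<gamma>) powr \<beta> = ell powr (\<gamma> * \<beta>)" by (simp add: powr_powr)
    moreover have "exp (ln 4 + 2 * ell powr (\<gamma> * \<beta>)) = 4 * exp (2 * ell powr (\<gamma> * \<beta>))"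
      by (simp add: exp_add)
    ultimately show ?thesis by (simp add: power2_eq_square mult_exp_exp)
  qed
  have "(2 * exp ((ell powr \<gamma>) powr \<beta>))\<^sup>2 * (fact N * (2 * ell powr \<gamma> + 1) ^ (N * d))
     * (fact N * (2 * ell + 1) ^ (N * d))\<^sup>2 * 9 ^ (N * d) * exp (- m * (ell - 2 - ell powr \<tau>))
     \<le> exp (ln 4 + 2 * ell powr (\<gamma> * \<beta>)) * (exp (?t * ln ell) * exp ?D)
     * (exp (?t * ln ell) * exp ?D)\<^sup>2 * exp (2 * ?D) * exp (- m * (ell - 2 - ell powr \<tau>))"
    unfolding f0
    by (intro mult_mono power_mono f1 f2 f3 f4 mult_nonneg_nonneg zero_le_power) (use ell0 in \<open>auto simp: add_pos_nonneg\<close>)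
  also have "\<dots> = exp (ln 4 + 2 * ell powr (\<gamma> * \<beta>) + 3 * (?t * ln ell) + 5 * ?D + 2 * m + m * ?t - m * ell)"
    by (simp add: power2_eq_square exp_add[symmetric] mult_exp_exp algebra_simps)
  also have "\<dots> \<le> exp (- m * ell / 2)" using Q by (simp add: algebra_simps)
  finally show ?thesis .
qed

lemma asymp:
  fixes m \<tau> \<gamma> \<beta> :: real and d :: nat
  assumes tau: "0 < \<tau>" "\<tau> < 1" and gam: "1 < \<gamma>" and gb: "\<gamma> * \<beta> < 1" and m0: "0 < m"
  shows "\<exists>l0. \<forall>ell\<ge>l0. 2 \<le> ell \<and> 2 + 2 * ell powr \<tau> \<le> ell \<and> ell + 1 \<le> ell powr \<gamma> \<and>
     ln 4 + 2 * ell powr (\<gamma> * \<beta>) + 3 * (ell powr \<tau> * ln ell) + 5 * real d * (ell powr \<tau> * ln (3 * ell\<^sup>2))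
            + 2 * m + m * ell powr \<tau> \<le> m * ell / 2"
proof -
  have e1: "eventually (\<lambda>ell::real. 2 \<le> ell) at_top" by real_asymp
  have e2: "eventually (\<lambda>ell::real. 2 + 2 * ell powr \<tau> \<le> ell) at_top" using tau by real_asymp
  have e3: "eventually (\<lambda>ell::real. ell + 1 \<le> ell powr \<gamma>) at_top" using gam by real_asymp
  have e4: "eventually (\<lambda>ell::real. ln 4 + 2 * m \<le> m * ell / 12) at_top" using m0 by real_asymp
  have e5: "eventually (\<lambda>ell::real. 2 * ell powr (\<gamma> * \<beta>) \<le> m * ell / 12) at_top" using gb m0 by real_asymp
  have e6: "eventually (\<lambda>ell::real. 3 * (ell powr \<tau> * ln ell) \<le> m * ell / 12) at_top" using tau m0 by real_asymp
  have e7: "eventually (\<lambda>ell::real. 5 * real d * (ell powr \<tau> * ln (3 * ell\<^sup>2)) \<le> m * ell / 12) at_top"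
    using tau m0 by real_asymp
  have e8: "eventually (\<lambda>ell::real. m * ell powr \<tau> \<le> m * ell / 12) at_top" using tau m0 by real_asymp
  have "eventually (\<lambda>ell::real. 2 \<le> ell \<and> 2 + 2 * ell powr \<tau> \<le> ell \<and> ell + 1 \<le> ell powr \<gamma> \<and>
     ln 4 + 2 * ell powr (\<gamma> * \<beta>) + 3 * (ell powr \<tau> * ln ell) + 5 * real d * (ell powr \<tau> * ln (3 * ell\<^sup>2))
            + 2 * m + m * ell powr \<tau> \<le> m * ell / 2) at_top"
    using e1 e2 e3 e4 e5 e6 e7 e8
  proof eventually_elim
    case (elim x)
    have "0 \<le> m * x" using m0 elim(1) by simp
    then show ?case using elim by linarith
  qed
  then show ?thesis unfolding eventually_at_top_linorder by blast
qed


lemma loc_le1: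
  assumes "loc_at N d \<tau> m ell \<Theta> x \<phi>" "y \<in> \<Theta>" "finite \<Theta>"
  shows "cmod (\<phi> y) \<le> 1"
proof -
  have "(cmod (\<phi> y))\<^sup>2 \<le> (\<Sum>y\<in>\<Theta>. (cmod (\<phi> y))\<^sup>2)"
    using assms(2,3) by (intro member_le_sum) auto
  also have "\<dots> = 1" using assms(1) unfolding loc_at_def by blast
  finally have "(cmod (\<phi> y))\<^sup>2 \<le> 1\<^sup>2" by simp
  then show ?thesis by (rule power2_le_imp_le) simp
qed

lemma decay:
  assumes N: "1 \<le> N" "1 \<le> d" and fin: "finite \<Theta>" and loc: "loc_at N d \<tau> m ell \<Theta> x \<phi>"
    and v: "v \<in> \<Theta>" and w: "w \<in> \<Theta>" and dvw: "ell - 2 \<le> dS N d v w"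
    and big: "ell powr \<tau> \<le> ell - 2 - ell powr \<tau>" and m0: "0 < m"
  shows "cmod (\<phi> w) * cmod (\<phi> v) \<le> exp (- m * (ell - 2 - ell powr \<tau>))"
proof -
  let ?t = "ell powr \<tau>"
  let ?a = "dS N d v x" and ?b = "dS N d w x"
  have ab: "ell - 2 \<le> ?a + ?b"
    using dvw dS_triangle[OF N, of v w x] dS_sym[OF N, of x w] by linarith
  have dec: "cmod (\<phi> y) \<le> exp (- m * dS N d y x)" if "y \<in> \<Theta>" "?t \<le> dS N d y x" for y
    using loc that unfolding loc_at_def by blast
  have v1: "cmod (\<phi> v) \<le> 1" and w1: "cmod (\<phi> w) \<le> 1" using loc_le1[OF loc _ fin] v w by auto
  have t0: "0 \<le> ?t" by simp
  show ?thesis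
  proof (cases "?t \<le> ?a \<and> ?t \<le> ?b")
    case True
    have "cmod (\<phi> w) * cmod (\<phi> v) \<le> exp (- m * ?b) * exp (- m * ?a)"
      using dec[OF w] dec[OF v] True by (intro mult_mono) auto
    also have "\<dots> = exp (- m * (?a + ?b))" by (simp add: mult_exp_exp algebra_simps)
    also have "\<dots> \<le> exp (- m * (ell - 2 - ?t))"
    proof -
      have "ell - 2 - ?t \<le> ?a + ?b" using ab t0 by linarith
      then have "m * (ell - 2 - ?t) \<le> m * (?a + ?b)" using m0 by (intro mult_left_mono) auto
      then show ?thesis by simp
    qed
    finally show ?thesis .
  next
    case False
    show ?thesis
    proof (cases "?t \<le> ?a")
      case True
      then have b: "?b < ?t" using False by simp
      then have "ell - 2 - ?t \<le> ?a" using ab by linarith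
      then have "?t \<le> ?a" using big by linarith
      have "cmod (\<phi> w) * cmod (\<phi> v) \<le> 1 * exp (- m * ?a)"
        using dec[OF v True] w1 by (intro mult_mono) auto
      also have "\<dots> \<le> exp (- m * (ell - 2 - ?t))" using \<open>ell - 2 - ?t \<le> ?a\<close> m0 by simp
      finally show ?thesis .
    next
      case a: False
      then have "ell - 2 - ?t \<le> ?b" using ab by linarith
      then have b: "?t \<le> ?b" using big by linarith
      have "cmod (\<phi> w) * cmod (\<phi> v) \<le> exp (- m * ?b) * 1"
        using dec[OF w b] v1 by (intro mult_mono) auto
      also have "\<dots> \<le> exp (- m * (ell - 2 - ?t))" using \<open>ell - 2 - ?t \<le> ?b\<close> m0 by simp
      finally show ?thesis .
    qed
  qed
qed


lemma nonzero_sum_term: "(\<Sum>y\<in>A. f y) \<noteq> (0::complex) \<Longrightarrow> \<exists>y\<in>A. f y \<noteq> 0"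
proof (rule ccontr)
  assume a: "(\<Sum>y\<in>A. f y) \<noteq> 0" "\<not> (\<exists>y\<in>A. f y \<noteq> 0)"
  then have "(\<Sum>y\<in>A. f y) = 0" by (intro sum.neutral) blast
  then show False using a(1) by contradiction
qed

lemma cube_bound:
  fixes \<psi> :: "pt \<Rightarrow> complex"
  assumes N: "1 \<le> N" "1 \<le> d" and ell0: "0 \<le> ell" and m0: "0 < m"
    and big: "ell powr \<tau> \<le> ell - 2 - ell powr \<tau>"
    and mloc: "m_loc_cube N d lam calV calU \<tau> m ell a"
    and subL: "cube N d ell a \<subseteq> \<Lambda>"
    and eig: "is_eigenpair N d lam calV calU \<Lambda> \<psi> \<mu>"
    and dpos: "0 < \<delta>" and gap: "\<forall>e \<in> spec N d lam calV calU (cube N d ell a). \<delta> \<le> \<bar>\<mu> - e\<bar>"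
    and M: "\<forall>y\<in>ex_bdry N d \<Lambda> (cube N d ell a). cmod (\<psi> y) \<le> M" and M0: "0 \<le> M"
    and v: "v \<in> cube N d ell a" and vfar: "\<forall>y\<in>\<Lambda> - cube N d ell a. ell - 1 \<le> dS N d v y"
  shows "cmod (\<psi> v) \<le> (1/\<delta>) * (real (card (cube N d ell a)) * real (card (cube N d ell a)) * 3 ^ (N*d)
            * exp (- m * (ell - 2 - ell powr \<tau>)) * M)"
proof -
  define \<Theta> where "\<Theta> = cube N d ell a"
  define E where "E = exp (- m * (ell - 2 - ell powr \<tau>))"
  have fin: "finite \<Theta>" unfolding \<Theta>_def using cube_fin_card[OF N ell0] by blast
  have sub: "\<Theta> \<subseteq> conf N d" unfolding \<Theta>_def cube_def by auto
  have "\<exists>B. finite B \<and>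
        (\<forall>\<phi>\<in>B. supp_in \<Theta> \<phi> \<and> (\<exists>e. is_eigenpair N d lam calV calU \<Theta> \<phi> e) \<and> m_loc_fun N d \<tau> m ell \<Theta> \<phi>) \<and>
        (\<forall>\<phi>\<in>B. \<forall>\<psi>\<in>B. inner_l2 \<Theta> \<phi> \<psi> = (if \<phi> = \<psi> then 1 else 0)) \<and>
        (\<forall>f. supp_in \<Theta> f \<longrightarrow> (\<exists>c. \<forall>x\<in>\<Theta>. f x = (\<Sum>\<phi>\<in>B. c \<phi> * \<phi> x)))"
    using mloc unfolding m_loc_cube_def Let_def \<Theta>_def .
  then obtain B where finB: "finite B"
    and Bp: "\<forall>\<phi>\<in>B. supp_in \<Theta> \<phi> \<and> (\<exists>e. is_eigenpair N d lam calV calU \<Theta> \<phi> e) \<and> m_loc_fun N d \<tau> m ell \<Theta> \<phi>"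
    and orth: "\<forall>\<phi>\<in>B. \<forall>\<psi>\<in>B. inner_l2 \<Theta> \<phi> \<psi> = (if \<phi> = \<psi> then 1 else 0)"
    and compl: "\<forall>f. supp_in \<Theta> f \<longrightarrow> (\<exists>c. \<forall>x\<in>\<Theta>. f x = (\<Sum>\<phi>\<in>B. c \<phi> * \<phi> x))"
    by (elim exE conjE)
  define ev where "ev \<phi> = (SOME e. is_eigenpair N d lam calV calU \<Theta> \<phi> e)" for \<phi>
  have evp: "is_eigenpair N d lam calV calU \<Theta> \<phi> (ev \<phi>)" if "\<phi> \<in> B" for \<phi>
  proof -
    have "\<exists>e. is_eigenpair N d lam calV calU \<Theta> \<phi> e" using Bp that by blast
    then show ?thesis unfolding ev_def by (rule someI_ex)
  qed
  have Bev: "\<forall>\<phi>\<in>B. \<forall>x\<in>\<Theta>. Hrestr N d lam calV calU \<Theta> \<phi> x = of_real (ev \<phi>) * \<phi> x"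
  proof (intro ballI)
    fix \<phi> x assume "\<phi> \<in> B" "x \<in> \<Theta>"
    then show "Hrestr N d lam calV calU \<Theta> \<phi> x = of_real (ev \<phi>) * \<phi> x"
      using evp[of \<phi>] unfolding is_eigenpair_def by blast
  qed
  have gapB: "\<forall>\<phi>\<in>B. \<delta> \<le> \<bar>\<mu> - ev \<phi>\<bar>"
  proof
    fix \<phi> assume "\<phi> \<in> B"
    then have "ev \<phi> \<in> spec N d lam calV calU (cube N d ell a)"
      using evp unfolding spec_def \<Theta>_def by blast
    then show "\<delta> \<le> \<bar>\<mu> - ev \<phi>\<bar>" using gap by blast
  qed
  define F where "F = (\<lambda>x. if x \<in> \<Theta> then \<psi> x else 0)"
  have Fs: "supp_in \<Theta> F" unfolding supp_in_def F_def by simp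
  have vT: "v \<in> \<Theta>" using v \<Theta>_def by simp
  have exp1: "cmod (F v) \<le> (1/\<delta>) * (\<Sum>\<phi>\<in>B. \<Sum>w\<in>\<Theta>.
            cmod (Hrestr N d lam calV calU \<Theta> F w - of_real \<mu> * F w) * cmod (\<phi> w) * cmod (\<phi> v))"
  proof (rule cube_expand[OF fin sub finB _ Bev orth compl dpos gapB Fs vT])
    show "\<forall>\<phi>\<in>B. supp_in \<Theta> \<phi>" using Bp by simp
  qed
  have subL': "\<Theta> \<subseteq> \<Lambda>" using subL \<Theta>_def by simp
  have termb: "cmod (Hrestr N d lam calV calU \<Theta> F w - of_real \<mu> * F w) * cmod (\<phi> w) * cmod (\<phi> v)
        \<le> 3 ^ (N*d) * M * E" if p: "\<phi> \<in> B" and w: "w \<in> \<Theta>" for \<phi> w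
  proof -
    have wL: "w \<in> \<Lambda>" using w subL' by blast
    have eqw: "Hrestr N d lam calV calU \<Lambda> \<psi> w = of_real \<mu> * \<psi> w"
      using eig wL unfolding is_eigenpair_def by blast
    have G: "Hrestr N d lam calV calU \<Theta> F w - of_real \<mu> * F w
        = (\<Sum>y\<in>nb N d w. if y \<in> \<Lambda> \<and> y \<notin> \<Theta> then \<psi> y else 0)"
      unfolding F_def by (rule resolvent_id[OF subL' w eqw])
    show ?thesis
    proof (cases "Hrestr N d lam calV calU \<Theta> F w - of_real \<mu> * F w = 0")
      case True
      then show ?thesis using M0 by (simp add: E_def)
    next
      case False
      then have "(\<Sum>y\<in>nb N d w. if y \<in> \<Lambda> \<and> y \<notin> \<Theta> then \<psi> y else 0) \<noteq> 0" unfolding G .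
      then obtain y where y0: "y \<in> nb N d w" "(if y \<in> \<Lambda> \<and> y \<notin> \<Theta> then \<psi> y else 0) \<noteq> 0"
        using nonzero_sum_term by blast
      have y: "y \<in> nb N d w" "y \<in> \<Lambda>" "y \<notin> \<Theta>" using y0 by (auto split: if_splits)
      have "ell - 1 \<le> dS N d v y" using vfar y \<Theta>_def by blast
      moreover have "dS N d w y \<le> 1" using nb_dS[OF N y(1)] .
      moreover have "dS N d v y \<le> dS N d v w + dS N d w y" by (rule dS_triangle[OF N])
      ultimately have dvw: "ell - 2 \<le> dS N d v w" by linarith
      obtain x where x: "x \<in> \<Theta>" "loc_at N d \<tau> m ell \<Theta> x \<phi>" using Bp p unfolding m_loc_fun_def by blast
      have dec: "cmod (\<phi> w) * cmod (\<phi> v) \<le> E" unfolding E_def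
        by (rule decay[OF N fin x(2) vT w dvw big m0])
      have Gb: "cmod (Hrestr N d lam calV calU \<Theta> F w - of_real \<mu> * F w) \<le> 3 ^ (N*d) * M"
      proof -
        have tb: "cmod (if y \<in> \<Lambda> \<and> y \<notin> \<Theta> then \<psi> y else 0) \<le> M" if yn: "y \<in> nb N d w" for y
        proof (cases "y \<in> \<Lambda> \<and> y \<notin> \<Theta>")
          case True
          have yc: "y \<in> conf N d" using yn unfolding nb_def by blast
          have d1: "dS N d w y \<le> 1" using nb_dS[OF N yn] .
          have "\<not> dS N d w y < 1"
          proof
            assume "dS N d w y < 1"
            then have "dS N d w y = 0" by (rule dS_lt1[OF N])
            then have "dS N d y a \<le> ell"
              using dS_triangle[OF N, of y a w] dS_sym[OF N, of w y] w unfolding \<Theta>_def cube_def by simp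
            then have "y \<in> \<Theta>" using yc unfolding \<Theta>_def cube_def by blast
            then show False using True by blast
          qed
          then have "dS N d w y = 1" using d1 by simp
          then have "y \<in> ex_bdry N d \<Lambda> \<Theta>" using True w unfolding ex_bdry_def bdry_def by blast
          then show ?thesis using M True \<Theta>_def by simp
        qed (use M0 in auto)
        have "cmod (\<Sum>y\<in>nb N d w. if y \<in> \<Lambda> \<and> y \<notin> \<Theta> then \<psi> y else 0)
            \<le> (\<Sum>y\<in>nb N d w. cmod (if y \<in> \<Lambda> \<and> y \<notin> \<Theta> then \<psi> y else 0))" by (rule norm_sum)
        also have "\<dots> \<le> (\<Sum>y\<in>nb N d w. M)" by (rule sum_mono) (rule tb)
        also have "\<dots> = real (card (nb N d w)) * M" by simp
        also have "\<dots> \<le> 3 ^ (N*d) * M"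
        proof -
          have "card (nb N d w) \<le> 3 ^ (N*d)" using nb_fin_card by blast
          then have "real (card (nb N d w)) \<le> real (3 ^ (N*d))" by (simp only: of_nat_le_iff)
          then have "real (card (nb N d w)) \<le> 3 ^ (N*d)" by simp
          then show ?thesis using M0 by (rule mult_right_mono)
        qed
        finally show ?thesis unfolding G .
      qed
      have "cmod (Hrestr N d lam calV calU \<Theta> F w - of_real \<mu> * F w) * (cmod (\<phi> w) * cmod (\<phi> v)) \<le> 3 ^ (N*d) * M * E"
        by (rule mult_mono[OF Gb dec]) (use M0 in auto)
      then show ?thesis by (simp add: mult.assoc)
    qed
  qed
  have "(\<Sum>\<phi>\<in>B. \<Sum>w\<in>\<Theta>. cmod (Hrestr N d lam calV calU \<Theta> F w - of_real \<mu> * F w) * cmod (\<phi> w) * cmod (\<phi> v))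
      \<le> (\<Sum>\<phi>\<in>B. \<Sum>w\<in>\<Theta>. 3 ^ (N*d) * M * E)"
    using termb by (intro sum_mono) auto
  also have "\<dots> = real (card B) * (real (card \<Theta>) * (3 ^ (N*d) * M * E))" by simp
  also have "card B = card \<Theta>" by (rule basis_card[OF fin finB orth compl])
  finally have S: "(\<Sum>\<phi>\<in>B. \<Sum>w\<in>\<Theta>. cmod (Hrestr N d lam calV calU \<Theta> F w - of_real \<mu> * F w) * cmod (\<phi> w) * cmod (\<phi> v))
      \<le> real (card \<Theta>) * real (card \<Theta>) * 3 ^ (N*d) * E * M" by (simp add: mult_ac)
  have "cmod (\<psi> v) = cmod (F v)" using vT F_def by simp
  also have "\<dots> \<le> (1/\<delta>) * (real (card \<Theta>) * real (card \<Theta>) * 3 ^ (N*d) * E * M)"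
  proof -
    have "0 \<le> 1/\<delta>" using dpos by simp
    with S have "(1/\<delta>) * (\<Sum>\<phi>\<in>B. \<Sum>w\<in>\<Theta>. cmod (Hrestr N d lam calV calU \<Theta> F w - of_real \<mu> * F w) * cmod (\<phi> w) * cmod (\<phi> v))
      \<le> (1/\<delta>) * (real (card \<Theta>) * real (card \<Theta>) * 3 ^ (N*d) * E * M)" by (rule mult_left_mono)
    then show ?thesis using exp1 by linarith
  qed
  finally show ?thesis unfolding \<Theta>_def E_def .
qed


lemma Ups_bound:
  fixes \<psi> :: "pt \<Rightarrow> complex"
  assumes N: "1 \<le> N" "1 \<le> d" and sub: "\<Upsilon> \<subseteq> \<Lambda>" and Lc: "\<Lambda> \<subseteq> conf N d" and finL: "finite \<Lambda>"
    and dpos: "0 < \<delta>" and sp: "\<forall>e\<in>spec N d lam calV calU \<Upsilon>. \<delta> \<le> \<bar>\<mu> - e\<bar>"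
    and eig: "is_eigenpair N d lam calV calU \<Lambda> \<psi> \<mu>"
    and K0: "0 \<le> Kc" and KY: "\<forall>u\<in>\<Upsilon>. \<forall>y\<in>nb N d u. y \<in> \<Lambda> \<and> y \<notin> \<Upsilon> \<longrightarrow> cmod (\<psi> y) \<le> Kc"
    and y0: "y0 \<in> \<Upsilon>"
  shows "cmod (\<psi> y0) \<le> (1/\<delta>) * (real (card \<Upsilon>) * 3 ^ (N*d) * Kc)"
proof -
  have fin: "finite \<Upsilon>" using finite_subset[OF sub finL] .
  have subc: "\<Upsilon> \<subseteq> conf N d" using sub Lc by blast
  define F where "F = (\<lambda>x. if x \<in> \<Upsilon> then \<psi> x else 0)"
  have Fs: "supp_in \<Upsilon> F" unfolding supp_in_def F_def by simp
  have sb: "\<delta>\<^sup>2 * (\<Sum>x\<in>\<Upsilon>. (cmod (F x))\<^sup>2)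
    \<le> (\<Sum>x\<in>\<Upsilon>. (cmod (Hrestr N d lam calV calU \<Upsilon> F x - of_real \<mu> * F x))\<^sup>2)"
    by (rule H_spec_bound[OF fin subc dpos sp Fs])
  have Gb: "cmod (Hrestr N d lam calV calU \<Upsilon> F x - of_real \<mu> * F x) \<le> 3 ^ (N*d) * Kc" if x: "x \<in> \<Upsilon>" for x
  proof -
    have xL: "x \<in> \<Lambda>" using x sub by blast
    have eqx: "Hrestr N d lam calV calU \<Lambda> \<psi> x = of_real \<mu> * \<psi> x"
      using eig xL unfolding is_eigenpair_def by blast
    have G: "Hrestr N d lam calV calU \<Upsilon> F x - of_real \<mu> * F x
        = (\<Sum>y\<in>nb N d x. if y \<in> \<Lambda> \<and> y \<notin> \<Upsilon> then \<psi> y else 0)"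
      unfolding F_def by (rule resolvent_id[OF sub x eqx])
    have tb: "cmod (if y \<in> \<Lambda> \<and> y \<notin> \<Upsilon> then \<psi> y else 0) \<le> Kc" if yn: "y \<in> nb N d x" for y
      using KY x yn K0 by auto
    have "cmod (\<Sum>y\<in>nb N d x. if y \<in> \<Lambda> \<and> y \<notin> \<Upsilon> then \<psi> y else 0)
        \<le> (\<Sum>y\<in>nb N d x. cmod (if y \<in> \<Lambda> \<and> y \<notin> \<Upsilon> then \<psi> y else 0))" by (rule norm_sum)
    also have "\<dots> \<le> (\<Sum>y\<in>nb N d x. Kc)" by (rule sum_mono) (rule tb)
    also have "\<dots> = real (card (nb N d x)) * Kc" by simp
    also have "\<dots> \<le> 3 ^ (N*d) * Kc"
    proof -
      have "card (nb N d x) \<le> 3 ^ (N*d)" using nb_fin_card by blast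
      then have "real (card (nb N d x)) \<le> real (3 ^ (N*d))" by (simp only: of_nat_le_iff)
      then have "real (card (nb N d x)) \<le> 3 ^ (N*d)" by simp
      then show ?thesis using K0 by (rule mult_right_mono)
    qed
    finally show ?thesis unfolding G .
  qed
  let ?K = "3 ^ (N*d) * Kc"
  have K0': "0 \<le> ?K" using K0 by simp
  have "(\<Sum>x\<in>\<Upsilon>. (cmod (Hrestr N d lam calV calU \<Upsilon> F x - of_real \<mu> * F x))\<^sup>2) \<le> (\<Sum>x\<in>\<Upsilon>. ?K\<^sup>2)"
    using Gb by (intro sum_mono power_mono) auto
  also have "\<dots> = real (card \<Upsilon>) * ?K\<^sup>2" by simp
  also have "\<dots> \<le> (real (card \<Upsilon>))\<^sup>2 * ?K\<^sup>2"
  proof -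
    have "1 \<le> card \<Upsilon>" using y0 fin by (simp add: Suc_le_eq card_gt_0_iff) blast
    then have "real (card \<Upsilon>) \<le> (real (card \<Upsilon>))\<^sup>2" by (simp add: power2_eq_square)
    then show ?thesis by (rule mult_right_mono) simp
  qed
  finally have a: "\<delta>\<^sup>2 * (\<Sum>x\<in>\<Upsilon>. (cmod (F x))\<^sup>2) \<le> (real (card \<Upsilon>) * ?K)\<^sup>2"
    using sb by (simp add: power_mult_distrib)
  have "(cmod (F y0))\<^sup>2 \<le> (\<Sum>x\<in>\<Upsilon>. (cmod (F x))\<^sup>2)" using y0 fin by (intro member_le_sum) auto
  then have "\<delta>\<^sup>2 * (cmod (F y0))\<^sup>2 \<le> \<delta>\<^sup>2 * (\<Sum>x\<in>\<Upsilon>. (cmod (F x))\<^sup>2)" by (rule mult_left_mono) simp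
  with a have "(\<delta> * cmod (F y0))\<^sup>2 \<le> (real (card \<Upsilon>) * ?K)\<^sup>2" by (simp add: power_mult_distrib)
  then have "\<delta> * cmod (F y0) \<le> real (card \<Upsilon>) * ?K" by (rule power2_le_imp_le) (use K0' in simp)
  then have "cmod (F y0) \<le> (1/\<delta>) * (real (card \<Upsilon>) * ?K)" using dpos by (simp add: field_simps)
  then show ?thesis using y0 unfolding F_def by (simp add: mult_ac)
qed


theorem lemma3p10:
  fixes m \<tau> \<gamma> \<beta> :: real and d :: nat
  assumes "0 < \<beta>" "\<beta> < 1" "0 < \<tau>" "\<tau> < 1" "1 < \<gamma>" "\<gamma> < 2"
    and "\<beta> < 1 / \<gamma>" "\<gamma> * \<beta> < \<tau>" "1 / \<gamma> < \<tau>"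
    and "0 < m" and "1 \<le> d"
  shows "\<exists>C. \<forall>N::nat. \<forall>ell L::real. \<forall>x0 :: pt. \<forall>lam::real. \<forall>calV calU :: (nat \<Rightarrow> int) \<Rightarrow> real.
           \<forall>\<psi> :: pt \<Rightarrow> complex. \<forall>\<mu>::real. \<forall>\<Upsilon> G :: pt set.
     1 \<le> N \<longrightarrow> 1 \<le> ell \<longrightarrow> L = ell powr \<gamma> \<longrightarrow> x0 \<in> conf N d \<longrightarrow> 0 < lam \<longrightarrow>
     finite {z. (\<forall>k. d \<le> k \<longrightarrow> z k = 0) \<and> calU z \<noteq> 0} \<longrightarrow>
     is_eigenpair N d lam calV calU (cube N d L x0) \<psi> \<mu> \<longrightarrow>
     \<Upsilon> \<subset> cube N d L x0 \<longrightarrow>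
     buffered N d lam calV calU \<tau> m ell L x0 \<Upsilon> G \<longrightarrow>
     (\<forall>e \<in> spec N d lam calV calU \<Upsilon>. 1/2 * exp (- (L powr \<beta>)) \<le> \<bar>\<mu> - e\<bar>) \<longrightarrow>
     (\<forall>a \<in> G. \<forall>e \<in> spec N d lam calV calU (cube N d ell a). 1/2 * exp (- (L powr \<beta>)) \<le> \<bar>\<mu> - e\<bar>) \<longrightarrow>
     C * (real N * ln (2 + real N)) powr (1 / \<tau>) \<le> ell \<longrightarrow>
     Max ((\<lambda>y. cmod (\<psi> y)) ` \<Upsilon>)
       \<le> exp (- ((m * (1 - 3 * ell powr (- (1 - \<tau>) / 2))) / 2) * ell) *
          Max (\<Union>a\<in>G. (\<lambda>v. cmod (\<psi> v)) ` ex_bdry N d (cube N d L x0) (cube N d ell a))"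
proof -
  have b0: "0 < \<beta>" and tau: "0 < \<tau>" "\<tau> < 1" and gam: "1 < \<gamma>" "\<gamma> < 2" and m0: "0 < m" and d1: "1 \<le> d"
    using assms by auto
  have gb: "\<gamma> * \<beta> < 1" using assms(7) gam by (simp add: field_simps)
  obtain l0 where l0: "\<forall>ell\<ge>l0. 2 \<le> ell \<and> 2 + 2 * ell powr \<tau> \<le> ell \<and> ell + 1 \<le> ell powr \<gamma> \<and>
     ln 4 + 2 * ell powr (\<gamma> * \<beta>) + 3 * (ell powr \<tau> * ln ell) + 5 * real d * (ell powr \<tau> * ln (3 * ell\<^sup>2))
            + 2 * m + m * ell powr \<tau> \<le> m * ell / 2"
    using asymp[OF tau gam(1) gb m0, of d] by blast
  define C where "C = max 1 l0"
  show ?thesis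
  proof (rule exI[of _ C], intro allI impI)
    fix N :: nat and ell L :: real and x0 :: pt and lam :: real and calV calU :: "(nat \<Rightarrow> int) \<Rightarrow> real"
      and \<psi> :: "pt \<Rightarrow> complex" and \<mu> :: real and \<Upsilon> G :: "pt set"
    assume N1: "1 \<le> N" and ell1: "1 \<le> ell" and Ldef: "L = ell powr \<gamma>" and x0: "x0 \<in> conf N d"
      and "0 < lam" and "finite {z. (\<forall>k. d \<le> k \<longrightarrow> z k = 0) \<and> calU z \<noteq> 0}"
      and eig: "is_eigenpair N d lam calV calU (cube N d L x0) \<psi> \<mu>"
      and Usub: "\<Upsilon> \<subset> cube N d L x0"
      and buf: "buffered N d lam calV calU \<tau> m ell L x0 \<Upsilon> G"
      and spU: "\<forall>e \<in> spec N d lam calV calU \<Upsilon>. 1/2 * exp (- (L powr \<beta>)) \<le> \<bar>\<mu> - e\<bar>"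
      and spG: "\<forall>a \<in> G. \<forall>e \<in> spec N d lam calV calU (cube N d ell a). 1/2 * exp (- (L powr \<beta>)) \<le> \<bar>\<mu> - e\<bar>"
      and Cell: "C * (real N * ln (2 + real N)) powr (1 / \<tau>) \<le> ell"
    note N = N1 d1
    let ?X = "real N * ln (2 + real N)"
    have ln3: "1 \<le> ln (3::real)" using exp_le by (subst ln_ge_iff) auto
    have "ln 3 \<le> ln (2 + real N)" using N1 by (subst ln_le_cancel_iff) auto
    then have lnN: "1 \<le> ln (2 + real N)" using ln3 by linarith
    have XN: "real N \<le> ?X" using lnN N1 by (simp add: mult_le_cancel_left1)
    have Np: "1 \<le> real N powr (1/\<tau>)" using N1 tau by (simp add: ge_one_powr_ge_zero)
    have XNp: "real N powr (1/\<tau>) \<le> ?X powr (1/\<tau>)" using XN tau by (intro powr_mono2) auto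
    have C1: "1 \<le> C" and Cl0: "l0 \<le> C" unfolding C_def by auto
    have "C * 1 \<le> C * ?X powr (1/\<tau>)" using Np XNp C1 by (intro mult_left_mono) auto
    then have ellC: "C \<le> ell" using Cell by simp
    then have ell_l0: "l0 \<le> ell" using Cl0 by simp
    have "1 * real N powr (1/\<tau>) \<le> C * ?X powr (1/\<tau>)" using XNp C1 Np by (intro mult_mono) auto
    then have NellT: "real N powr (1/\<tau>) \<le> ell" using Cell by simp
    have "real N = (real N powr (1/\<tau>)) powr \<tau>" using tau N1 by (simp add: powr_powr)
    also have "\<dots> \<le> ell powr \<tau>" using NellT tau by (intro powr_mono2) auto
    finally have Nle: "real N \<le> ell powr \<tau>" .
    have ell2: "2 \<le> ell" and big0: "2 + 2 * ell powr \<tau> \<le> ell" and Lbig: "ell + 1 \<le> ell powr \<gamma>"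
      and Q: "ln 4 + 2 * ell powr (\<gamma> * \<beta>) + 3 * (ell powr \<tau> * ln ell) + 5 * real d * (ell powr \<tau> * ln (3 * ell\<^sup>2))
            + 2 * m + m * ell powr \<tau> \<le> m * ell / 2"
      using l0 ell_l0 by blast+
    have big: "ell powr \<tau> \<le> ell - 2 - ell powr \<tau>" using big0 by linarith
    have ell0: "0 \<le> ell" using ell1 by simp
    show "Max ((\<lambda>y. cmod (\<psi> y)) ` \<Upsilon>)
       \<le> exp (- ((m * (1 - 3 * ell powr (- (1 - \<tau>) / 2))) / 2) * ell) *
          Max (\<Union>a\<in>G. (\<lambda>v. cmod (\<psi> v)) ` ex_bdry N d (cube N d L x0) (cube N d ell a))"
    proof -
    define \<Lambda> where "\<Lambda> = cube N d L x0"
    define \<delta> where "\<delta> = 1/2 * exp (- (L powr \<beta>))"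
    have dpos: "0 < \<delta>" unfolding \<delta>_def by simp
    have L0: "0 \<le> L" unfolding Ldef by simp
    have Lb: "ell + 1 \<le> L" using Lbig Ldef by simp
    have finL: "finite \<Lambda>" and cardL: "real (card \<Lambda>) \<le> fact N * (2*L+1) ^ (N*d)"
      using cube_fin_card[OF N L0, of x0] unfolding \<Lambda>_def by auto
    have Lc: "\<Lambda> \<subseteq> conf N d" unfolding \<Lambda>_def cube_def by auto
    have symU: "symmetric_set N \<Upsilon>" and UL: "\<Upsilon> \<subseteq> \<Lambda>"
      and Ubr: "\<exists>b R. b \<in> \<Lambda> \<and> ell \<le> R \<and> R \<le> L \<and> \<Upsilon> = cube N d R b \<inter> \<Lambda>"
      and GX: "G \<subseteq> Xi N d L x0 ell"
      and Gloc: "\<forall>a\<in>G. m_loc_cube N d lam calV calU \<tau> m ell a"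
      and Gin: "in_bdry N d \<Lambda> \<Upsilon> \<subseteq> (\<Union>a\<in>G. inner_part N d \<Lambda> (cube N d ell a) ell)"
      using buf unfolding buffered_def \<Lambda>_def by blast+
    obtain b R where bR: "b \<in> \<Lambda>" "ell \<le> R" "R \<le> L" "\<Upsilon> = cube N d R b \<inter> \<Lambda>" using Ubr by blast
    have Gsub: "cube N d ell a \<subseteq> \<Lambda>" if "a \<in> G" for a using GX that unfolding Xi_def \<Lambda>_def by blast
    have dSU: "dS N d u y = 1" if u: "u \<in> \<Upsilon>" and y: "y \<in> nb N d u" "y \<notin> \<Upsilon>" "y \<in> \<Lambda>" for u y
    proof -
      have yc: "y \<in> conf N d" using y unfolding nb_def by blast
      have "\<not> dS N d u y < 1"
      proof
        assume "dS N d u y < 1"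
        then have "dS N d u y = 0" by (rule dS_lt1[OF N])
        then have "dS N d y b \<le> R"
          using dS_triangle[OF N, of y b u] dS_sym[OF N, of u y] u bR(4) unfolding cube_def by simp
        then have "y \<in> \<Upsilon>" using yc y(3) bR(4) unfolding cube_def by blast
        then show False using y(2) by blast
      qed
      then show ?thesis using nb_dS[OF N y(1)] by simp
    qed
    have inB: "u \<in> in_bdry N d \<Lambda> \<Upsilon>" if u: "u \<in> \<Upsilon>" and y: "y \<in> nb N d u" "y \<notin> \<Upsilon>" "y \<in> \<Lambda>" for u y
      using dSU[OF u y] u y unfolding in_bdry_def bdry_def by blast
    define S where "S = (\<Union>a\<in>G. (\<lambda>v. cmod (\<psi> v)) ` ex_bdry N d \<Lambda> (cube N d ell a))"
    have finS: "finite S"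
    proof -
      have "S \<subseteq> (\<lambda>v. cmod (\<psi> v)) ` \<Lambda>" unfolding S_def ex_bdry_def by blast
      then show ?thesis using finL finite_subset by blast
    qed
    have bU: "b \<in> \<Upsilon>"
    proof -
      have "dS N d b b = 0" by (rule dS_refl[OF N])
      then have "b \<in> cube N d R b" using bR(1,2) ell0 Lc unfolding cube_def by auto
      then show ?thesis using bR(1,4) by blast
    qed
    obtain q where q: "q \<in> \<Lambda>" "q \<notin> \<Upsilon>" using Usub unfolding \<Lambda>_def by blast
    obtain u v where uv: "u \<in> \<Upsilon>" "v \<in> \<Lambda> - \<Upsilon>" "v \<in> nb N d u"
      using connect[OF N UL[unfolded \<Lambda>_def] symU bU q[unfolded \<Lambda>_def]] unfolding \<Lambda>_def by blast
    have "u \<in> in_bdry N d \<Lambda> \<Upsilon>" using inB[OF uv(1) uv(3)] uv(2) by blast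
    then obtain a where aG: "a \<in> G" and ua: "u \<in> inner_part N d \<Lambda> (cube N d ell a) ell" using Gin by blast
    have uA: "u \<in> cube N d ell a" using ua unfolding inner_part_def by blast
    obtain z where z: "z \<in> \<Lambda>" "ell < dS N d z a"
      using far_point[OF N x0 ell0 Lb, of a] unfolding \<Lambda>_def by blast
    have zA: "z \<notin> cube N d ell a" using z unfolding cube_def by auto
    have symA: "symmetric_set N (cube N d ell a)"
      unfolding symmetric_set_def cube_def using perm_conf dS_perm1[OF N] by auto
    obtain u' v' where uv': "u' \<in> cube N d ell a" "v' \<in> \<Lambda> - cube N d ell a" "v' \<in> nb N d u'"
      using connect[OF N Gsub[OF aG, unfolded \<Lambda>_def] symA uA z(1)[unfolded \<Lambda>_def] zA] unfolding \<Lambda>_def by blast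
    have "dS N d u' v' = 1"
    proof -
      have yc: "v' \<in> conf N d" using uv'(3) unfolding nb_def by blast
      have "\<not> dS N d u' v' < 1"
      proof
        assume "dS N d u' v' < 1"
        then have "dS N d u' v' = 0" by (rule dS_lt1[OF N])
        then have "dS N d v' a \<le> ell"
          using dS_triangle[OF N, of v' a u'] dS_sym[OF N, of u' v'] uv'(1) unfolding cube_def by simp
        then have "v' \<in> cube N d ell a" using yc unfolding cube_def by blast
        then show False using uv'(2) by blast
      qed
      then show ?thesis using nb_dS[OF N uv'(3)] by simp
    qed
    then have "v' \<in> ex_bdry N d \<Lambda> (cube N d ell a)" using uv' unfolding ex_bdry_def bdry_def by blast
    then have "cmod (\<psi> v') \<in> S" using aG unfolding S_def by blast
    then have Sne: "S \<noteq> {}" by blast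
    define M where "M = Max S"
    have Mb: "\<forall>a\<in>G. \<forall>y\<in>ex_bdry N d \<Lambda> (cube N d ell a). cmod (\<psi> y) \<le> M"
      unfolding M_def S_def using finS[unfolded S_def] by (auto intro!: Max_ge)
    have M0: "0 \<le> M" using Max_ge[OF finS \<open>cmod (\<psi> v') \<in> S\<close>] unfolding M_def by (meson norm_ge_zero order_trans)
    define CA where "CA = fact N * (2 * ell + 1) ^ (N*d)"
    define E where "E = exp (- m * (ell - 2 - ell powr \<tau>))"
    define Kc where "Kc = (1/\<delta>) * (CA * CA * 3 ^ (N*d) * E * M)"
    have K0: "0 \<le> Kc" unfolding Kc_def CA_def E_def using dpos M0 by simp
    have KY: "\<forall>u\<in>\<Upsilon>. \<forall>y\<in>nb N d u. y \<in> \<Lambda> \<and> y \<notin> \<Upsilon> \<longrightarrow> cmod (\<psi> y) \<le> Kc"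
    proof (intro ballI impI)
      fix u y assume u: "u \<in> \<Upsilon>" and yn: "y \<in> nb N d u" and yy: "y \<in> \<Lambda> \<and> y \<notin> \<Upsilon>"
      have d1': "dS N d u y = 1" using dSU[OF u yn] yy by blast
      have "u \<in> in_bdry N d \<Lambda> \<Upsilon>" using inB[OF u yn] yy by blast
      then obtain a where aG: "a \<in> G" and ua: "u \<in> inner_part N d \<Lambda> (cube N d ell a) ell" using Gin by blast
      have far: "\<forall>y'\<in>\<Lambda> - cube N d ell a. ell \<le> dS N d u y'" using ua unfolding inner_part_def by blast
      have yA: "y \<in> cube N d ell a"
      proof (rule ccontr)
        assume "y \<notin> cube N d ell a"
        then have "ell \<le> dS N d u y" using far yy by blast
        then show False using d1' ell2 by simp
      qed
      have vfar: "\<forall>y'\<in>\<Lambda> - cube N d ell a. ell - 1 \<le> dS N d y y'"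
      proof
        fix y' assume y': "y' \<in> \<Lambda> - cube N d ell a"
        have "dS N d u y' \<le> dS N d u y + dS N d y y'" by (rule dS_triangle[OF N])
        moreover have "ell \<le> dS N d u y'" using far y' by blast
        ultimately show "ell - 1 \<le> dS N d y y'" using d1' by linarith
      qed
      have gapA: "\<forall>e \<in> spec N d lam calV calU (cube N d ell a). \<delta> \<le> \<bar>\<mu> - e\<bar>"
        using spG aG unfolding \<delta>_def by blast
      have cb: "cmod (\<psi> y) \<le> (1/\<delta>) * (real (card (cube N d ell a)) * real (card (cube N d ell a)) * 3 ^ (N*d) * E * M)"
        unfolding E_def
        by (rule cube_bound[OF N ell0 m0 big _ Gsub[OF aG] eig[folded \<Lambda>_def] dpos gapA _ M0 yA vfar])
           (use Gloc aG Mb in blast)+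
      have cA: "real (card (cube N d ell a)) \<le> CA" using cube_fin_card[OF N ell0, of a] unfolding CA_def by simp
      have E0: "0 \<le> E" unfolding E_def by simp
      have "real (card (cube N d ell a)) * real (card (cube N d ell a)) * 3 ^ (N*d) * E * M
           \<le> CA * CA * 3 ^ (N*d) * E * M"
        using cA E0 M0 by (intro mult_right_mono mult_mono) auto
      then have "(1/\<delta>) * (real (card (cube N d ell a)) * real (card (cube N d ell a)) * 3 ^ (N*d) * E * M)
           \<le> Kc" unfolding Kc_def using dpos by (intro mult_left_mono) auto
      then show "cmod (\<psi> y) \<le> Kc" using cb by linarith
    qed
    have ptw: "cmod (\<psi> y0) \<le> exp (- m * ell / 2) * M" if y0: "y0 \<in> \<Upsilon>" for y0
    proof -
      have spU': "\<forall>e\<in>spec N d lam calV calU \<Upsilon>. \<delta> \<le> \<bar>\<mu> - e\<bar>" using spU unfolding \<delta>_def by blast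
      have "cmod (\<psi> y0) \<le> (1/\<delta>) * (real (card \<Upsilon>) * 3 ^ (N*d) * Kc)"
        by (rule Ups_bound[OF N UL Lc finL dpos spU' eig[folded \<Lambda>_def] K0 KY y0])
      also have "\<dots> \<le> (1/\<delta>) * (real (card \<Lambda>) * 3 ^ (N*d) * Kc)"
      proof -
        have "card \<Upsilon> \<le> card \<Lambda>" by (rule card_mono[OF finL UL])
        then have "real (card \<Upsilon>) \<le> real (card \<Lambda>)" by simp
        then show ?thesis using dpos K0 by (intro mult_left_mono mult_right_mono) auto
      qed
      also have "\<dots> \<le> (1/\<delta>) * ((fact N * (2*L+1) ^ (N*d)) * 3 ^ (N*d) * Kc)"
        using cardL dpos K0 by (intro mult_left_mono mult_right_mono) auto
      also have "\<dots> = ((2 * exp ((ell powr \<gamma>) powr \<beta>))\<^sup>2 * (fact N * (2 * ell powr \<gamma> + 1) ^ (N * d))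
          * (fact N * (2 * ell + 1) ^ (N * d))\<^sup>2 * 9 ^ (N * d) * exp (- m * (ell - 2 - ell powr \<tau>))) * M"
      proof -
        have id: "1/\<delta> = 2 * exp ((ell powr \<gamma>) powr \<beta>)" unfolding \<delta>_def Ldef by (simp add: exp_minus field_simps)
        have n9: "(9::real) ^ (N*d) = 3 ^ (N*d) * 3 ^ (N*d)" by (simp add: power_mult_distrib[symmetric])
        show ?thesis unfolding Kc_def id CA_def E_def n9 Ldef by (simp add: power2_eq_square mult_ac)
      qed
      also have "\<dots> \<le> exp (- m * ell / 2) * M"
        by (rule mult_right_mono[OF numeric[OF ell1 N1 d1 Nle tau gam m0 b0 Q] M0])
      finally show ?thesis .
    qed
    have finU: "finite \<Upsilon>" using finite_subset[OF UL finL] .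
    have "Max ((\<lambda>y. cmod (\<psi> y)) ` \<Upsilon>) \<le> exp (- m * ell / 2) * M"
      using finU bU ptw by (subst Max_le_iff) auto
    also have "\<dots> \<le> exp (- ((m * (1 - 3 * ell powr (- (1 - \<tau>) / 2))) / 2) * ell) * M"
    proof (rule mult_right_mono[OF _ M0])
      have "0 \<le> 3 * ell powr (- (1 - \<tau>) / 2)" by simp
      then have "m * (1 - 3 * ell powr (- (1 - \<tau>) / 2)) \<le> m" using m0 by (simp add: algebra_simps)
      then have "- m * ell / 2 \<le> - ((m * (1 - 3 * ell powr (- (1 - \<tau>) / 2))) / 2) * ell"
        using ell0 by (simp add: mult_right_mono divide_right_mono)
      then show "exp (- m * ell / 2) \<le> exp (- ((m * (1 - 3 * ell powr (- (1 - \<tau>) / 2))) / 2) * ell)" by simp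
    qed
    finally show ?thesis unfolding M_def S_def \<Lambda>_def .
    qed

  qed
qed


end
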